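(* Let $H$, $B$, $V$, $\gamma$, $A(\cdot)$, $c$, $\Gamma$, $\|A\|$ be as in the context, and assume moreover that $\gamma\in L(V)$ (i.e. $\gamma$ maps $V$ into $V$ boundedly) and that there are constants $\rho>0$, $\eta>0$ with $$\langle Bv,\gamma v\rangle\ge \rho|v|^2+\eta\|v\|^2\quad\text{for all } v\in V.$$ Assume $$\|A\|<\sqrt{c\rho+\tfrac{c^2}{4}\Gamma^2}-\tfrac{c}{2}\Gamma .$$ Then there exist constants $\delta>0$ and $M>0$ such that every (mild) solution $u$ of $$u''(t)+\big[B+A(t)\big]u(t)+\gamma u'(t)=0,\quad t\ge 0,\qquad u(0)=u_0\in V,\ u'(0)=u_1\in H,$$ satisfies $$\|u(t)\|^2+|u'(t)|^2\le M\big[\|u(s)\|^2+|u'(s)|^2\big]e^{-\delta(t-s)}\quad\text{whenever } 0\le s\le t.$$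
   Context: $H$ is a real Hilbert space with inner product $\langle\cdot,\cdot\rangle$ and norm $|\cdot|$. $B$ is a self-adjoint linear operator on $H$ with dense domain, coercive: there is $b>0$ with $\langle Bv,v\rangle\ge b|v|^2$ for all $v$ in its domain. $V=D(B^{1/2})$ with norm $\|v\|=|B^{1/2}v|$; $V'$ is its dual, $B$ is identified with its extension in $L(V,V')$, and the $V'\times V$ duality pairing is also written $\langle\cdot,\cdot\rangle$. $\gamma\in L(H)$ satisfies $\langle\gamma v,v\rangle\ge c|v|^2$ for all $v\in H$, for some constant $c>0$, and $\Gamma=\|\gamma\|_{L(H)}$. $A\in L^\infty(\mathbb{R}^+,L(H))$ and $\|A\|=\operatorname{ess\,sup}_{t\ge0}\|A(t)\|_{L(H)}$. A mild solution is a function $u\in C([0,\infty),V)\cap C^1([0,\infty),H)\cap W^{2,\infty}_{\mathrm{loc}}([0,\infty),V')$ satisfying the equation in $V'$ for a.e. $t$ and the initial conditions. *)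

theory Defs
  imports "HOL-Analysis.Analysis" "HOL-Probability.Essential_Supremum"
begin

text \<open>An (unbounded) linear operator T on a real Hilbert space with domain D is
  modelled as a function T together with its domain D (values of T outside D
  are irrelevant).\<close>

definition lin_op_on :: "'h::real_inner set \<Rightarrow> ('h \<Rightarrow> 'h) \<Rightarrow> bool" where
  "lin_op_on D T \<longleftrightarrow> subspace D \<and>
     (\<forall>x\<in>D. \<forall>y\<in>D. T (x + y) = T x + T y) \<and> (\<forall>x\<in>D. \<forall>a::real. T (a *\<^sub>R x) = a *\<^sub>R T x)"

text \<open>Densely defined self-adjoint operator: T is symmetric on its dense domain D,
  and the domain of the adjoint, i.e. the set of v for which some w satisfies
  inner (T u) v = inner u w for all u in D, is contained in D.\<close>

definition self_adjoint_op :: "'h::real_inner set \<Rightarrow> ('h \<Rightarrow> 'h) \<Rightarrow> bool" where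
  "self_adjoint_op D T \<longleftrightarrow> lin_op_on D T \<and> closure D = UNIV \<and>
     (\<forall>u\<in>D. \<forall>v\<in>D. inner (T u) v = inner u (T v)) \<and>
     (\<forall>v w. (\<forall>u\<in>D. inner (T u) v = inner u w) \<longrightarrow> v \<in> D)"

text \<open>(DS, S) is the nonnegative self-adjoint square root of the operator (D, T),
  i.e. S = T^(1/2) with domain DS: S is self-adjoint and nonnegative, and S o S = T
  as unbounded operators (same domain, same values).\<close>

definition is_sqrt_op :: "'h::real_inner set \<Rightarrow> ('h \<Rightarrow> 'h) \<Rightarrow> 'h set \<Rightarrow> ('h \<Rightarrow> 'h) \<Rightarrow> bool" where
  "is_sqrt_op D T DS S \<longleftrightarrow> self_adjoint_op DS S \<and> (\<forall>x\<in>DS. inner (S x) x \<ge> 0) \<and>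
     D = {x \<in> DS. S x \<in> DS} \<and> (\<forall>x\<in>D. S (S x) = T x)"

text \<open>Mild solution of u'' + (B + A(t)) u + gamma u' = 0 on [0,oo), where V = DS with
  norm |S v| (S = B^(1/2)), and the V'-V pairing <B w, v> = inner (S w) (S v).
  u' is the (H-valued) derivative of u.  The requirement
  u' in W^{2,infty}_loc([0,oo),V') together with the equation in V' for a.e. t is
  expressed by testing against every v in V: the scalar function
  t |-> inner (u' t) v is the indefinite integral of
  -(<B u(r), v> + inner (A r (u r)) v + inner (gamma (u' r)) v).\<close>

definition mild_solution ::
  "'h::{real_inner,complete_space} set \<Rightarrow> ('h \<Rightarrow> 'h) \<Rightarrow> ('h \<Rightarrow>\<^sub>L 'h) \<Rightarrow> (real \<Rightarrow> ('h \<Rightarrow>\<^sub>L 'h))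
     \<Rightarrow> (real \<Rightarrow> 'h) \<Rightarrow> (real \<Rightarrow> 'h) \<Rightarrow> bool" where
  "mild_solution DS S \<gamma> A u u' \<longleftrightarrow>
     (\<forall>t\<ge>0. u t \<in> DS) \<and>
     continuous_on {0..} u \<and> continuous_on {0..} (\<lambda>t. S (u t)) \<and>
     (\<forall>t\<ge>0. (u has_vector_derivative u' t) (at t within {0..})) \<and>
     continuous_on {0..} u' \<and>
     (\<forall>v\<in>DS. \<forall>t\<ge>0.
        ((\<lambda>r. - (inner (S (u r)) (S v) + inner (blinfun_apply (A r) (u r)) v
                   + inner (blinfun_apply \<gamma> (u' r)) v))
          has_integral (inner (u' t) v - inner (u' 0) v)) {0..t})"

end

theory Submission
  imports Defs
begin

lemma cont_bound:
  fixes f :: "real \<Rightarrow> 'a::real_normed_vector"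
  assumes "continuous_on {s..t} f"
  shows "\<exists>B. \<forall>x\<in>{s..t}. norm (f x) \<le> B"
proof -
  have "compact (f ` {s..t})" using assms compact_continuous_image by blast
  then have "bounded (f ` {s..t})" by (rule compact_imp_bounded)
  then show ?thesis by (auto simp: bounded_iff)
qed

lemma ucont:
  fixes f :: "real \<Rightarrow> 'a::real_normed_vector"
  assumes "continuous_on {s..t} f" "e > 0"
  shows "\<exists>d>0. \<forall>x\<in>{s..t}. \<forall>y\<in>{s..t}. \<bar>y - x\<bar> < d \<longrightarrow> norm (f y - f x) < e"
proof -
  have "uniformly_continuous_on {s..t} f" using assms(1) compact_uniformly_continuous by blast
  then obtain d where "d > 0" "\<forall>x\<in>{s..t}. \<forall>y\<in>{s..t}. dist y x < d \<longrightarrow> dist (f y) (f x) < e"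
    using assms(2) unfolding uniformly_continuous_on_def by metis
  then show ?thesis by (auto simp: dist_norm)
qed

lemma local_to_global:
  fixes F G :: "real \<Rightarrow> real"
  assumes st: "s \<le> t"
  and loc: "\<And>e. e > 0 \<Longrightarrow> \<exists>d>0. \<forall>x y. s \<le> x \<longrightarrow> x \<le> y \<longrightarrow> y \<le> t \<longrightarrow> y - x < d \<longrightarrow> F y - F x \<le> G y - G x + e * (y - x)"
  shows "F t - F s \<le> G t - G s"
proof -
  have main: "F t - F s \<le> G t - G s + e * (t - s)" if e: "e > 0" for e
  proof -
    obtain d where d: "d > 0" and dd: "\<forall>x y. s \<le> x \<longrightarrow> x \<le> y \<longrightarrow> y \<le> t \<longrightarrow> y - x < d \<longrightarrow> F y - F x \<le> G y - G x + e * (y - x)"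
      using loc[OF e] by blast
    obtain n :: nat where n: "(t - s) / d < real n" using reals_Archimedean2 by blast
    have "0 \<le> (t - s) / d" using st d by simp
    then have npos: "n > 0" using n by linarith
    define h where "h = (t - s) / n"
    have h0: "h \<ge> 0" using st npos by (simp add: h_def)
    have hd: "h < d" using n d npos unfolding h_def by (simp add: field_simps)
    have "k \<le> n \<longrightarrow> F (s + real k * h) - F s \<le> G (s + real k * h) - G s + e * (real k * h)" for k
    proof (induction k)
      case 0 then show ?case by simp
    next
      case (Suc k)
      show ?case
      proof
        assume kn: "Suc k \<le> n"
        have le: "s + real (Suc k) * h \<le> t"
        proof -
          have "real (Suc k) * h \<le> real n * h" using kn h0 by (intro mult_right_mono) auto
          also have "\<dots> = t - s" using npos by (simp add: h_def)
          finally show ?thesis by simp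
        qed
        have "F (s + real (Suc k) * h) - F (s + real k * h) \<le> G (s + real (Suc k) * h) - G (s + real k * h) + e * h"
          using dd[rule_format, of "s + real k * h" "s + real (Suc k) * h"] le h0 hd
          by (simp add: algebra_simps mult_nonneg_nonneg)
        with Suc kn show "F (s + real (Suc k) * h) - F s \<le> G (s + real (Suc k) * h) - G s + e * (real (Suc k) * h)"
          by (simp add: algebra_simps)
      qed
    qed
    from this[of n] have "F (s + real n * h) - F s \<le> G (s + real n * h) - G s + e * (real n * h)" by simp
    moreover have "s + real n * h = t" "real n * h = t - s" using npos by (auto simp: h_def)
    ultimately show ?thesis by simp
  qed
  show ?thesis
  proof (rule field_le_epsilon)
    fix e :: real assume e: "e > 0"
    have "F t - F s \<le> G t - G s + (e / (t - s + 1)) * (t - s)" using main[of "e / (t - s + 1)"] e st by simp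
    also have "(e / (t - s + 1)) * (t - s) \<le> e" using e st by (simp add: field_simps)
    finally show "F t - F s \<le> G t - G s + e" by simp
  qed
qed

locale wsol =
  fixes DS :: "'h::{real_inner,complete_space} set" and S :: "'h \<Rightarrow> 'h" and g :: "'h \<Rightarrow>\<^sub>L 'h"
    and u u' :: "real \<Rightarrow> 'h" and a :: real
  assumes sub: "subspace DS"
    and S_add: "\<And>x y. x \<in> DS \<Longrightarrow> y \<in> DS \<Longrightarrow> S (x + y) = S x + S y"
    and S_scale: "\<And>x c. x \<in> DS \<Longrightarrow> S (c *\<^sub>R x) = c *\<^sub>R S x"
    and uDS: "\<And>t. t \<ge> 0 \<Longrightarrow> u t \<in> DS"
    and u_cont: "continuous_on {0..} u"
    and Su_cont: "continuous_on {0..} (\<lambda>t. S (u t))"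
    and u_der: "\<And>t. t \<ge> 0 \<Longrightarrow> (u has_vector_derivative u' t) (at t within {0..})"
    and u'_cont: "continuous_on {0..} u'"
    and a_nn: "a \<ge> 0"
    and W: "\<And>v s t. v \<in> DS \<Longrightarrow> 0 \<le> s \<Longrightarrow> s \<le> t \<Longrightarrow>
       \<bar>inner (u' t - u' s) v + integral {s..t} (\<lambda>r. inner (S (u r)) (S v) + inner (blinfun_apply g (u' r)) v)\<bar>
         \<le> norm v * integral {s..t} (\<lambda>r. a * norm (u r))"
begin

lemma S_diff: "x \<in> DS \<Longrightarrow> y \<in> DS \<Longrightarrow> S (x - y) = S x - S y"
proof -
  assume x: "x \<in> DS" and y: "y \<in> DS"
  have m: "(-1) *\<^sub>R y \<in> DS" using sub y by (simp add: subspace_neg)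
  have "S (x - y) = S (x + (-1) *\<^sub>R y)" by simp
  also have "\<dots> = S x + S ((-1) *\<^sub>R y)" using S_add[OF x m] .
  also have "\<dots> = S x - S y" using S_scale[OF y, of "-1"] by simp
  finally show ?thesis .
qed

lemma cont_sub: "0 \<le> (s::real) \<Longrightarrow> continuous_on {0..} f \<Longrightarrow> continuous_on {s..t} f"
  by (rule continuous_on_subset[of "{0..}"]) auto

lemma PR_local:
  fixes w w' :: "real \<Rightarrow> 'h"
  assumes st: "0 \<le> s" "s \<le> t"
    and wDS: "\<And>r. r \<in> {s..t} \<Longrightarrow> w r \<in> DS"
    and Swc: "continuous_on {s..t} (\<lambda>r. S (w r))"
    and wd: "\<And>r. r \<in> {s..t} \<Longrightarrow> (w has_vector_derivative w' r) (at r within {s..t})"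
    and w'c: "continuous_on {s..t} w'"
    and e: "e > 0"
  shows "\<exists>d>0. \<forall>x y. s \<le> x \<longrightarrow> x \<le> y \<longrightarrow> y \<le> t \<longrightarrow> y - x < d \<longrightarrow>
     \<bar>inner (u' y) (w y) - inner (u' x) (w x) + integral {x..y} (\<lambda>r. inner (S (u r)) (S (w r)) + inner (blinfun_apply g (u' r)) (w r) - inner (u' r) (w' r))\<bar>
       \<le> integral {x..y} (\<lambda>r. a * norm (u r) * norm (w r)) + e * (y - x)"
proof -
  have wc: "continuous_on {s..t} w"
    using wd by (metis continuous_on_eq_continuous_within has_vector_derivative_continuous)
  have uc: "continuous_on {s..t} u" using cont_sub[OF st(1) u_cont] .
  have Suc: "continuous_on {s..t} (\<lambda>r. S (u r))" using cont_sub[OF st(1) Su_cont] .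
  have u'c: "continuous_on {s..t} u'" using cont_sub[OF st(1) u'_cont] .
  obtain B1 where B1: "\<forall>x\<in>{s..t}. norm (u x) \<le> B1" using cont_bound[OF uc] by blast
  obtain B2 where B2: "\<forall>x\<in>{s..t}. norm (S (u x)) \<le> B2" using cont_bound[OF Suc] by blast
  obtain B3 where B3: "\<forall>x\<in>{s..t}. norm (u' x) \<le> B3" using cont_bound[OF u'c] by blast
  obtain B4 where B4: "\<forall>x\<in>{s..t}. norm (w' x) \<le> B4" using cont_bound[OF w'c] by blast
  define C where "C = a * \<bar>B1\<bar> + \<bar>B2\<bar> + norm g * \<bar>B3\<bar> + \<bar>B4\<bar> + 1"
  have Cpos: "C > 0" using a_nn by (simp add: C_def add_nonneg_pos)
  define e' where "e' = e / C"
  have e'pos: "e' > 0" using e Cpos by (simp add: e'_def)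
  obtain d1 where d1: "d1 > 0" "\<forall>x\<in>{s..t}. \<forall>y\<in>{s..t}. \<bar>y - x\<bar> < d1 \<longrightarrow> norm (w y - w x) < e'"
    using ucont[OF wc e'pos] by blast
  obtain d2 where d2: "d2 > 0" "\<forall>x\<in>{s..t}. \<forall>y\<in>{s..t}. \<bar>y - x\<bar> < d2 \<longrightarrow> norm (S (w y) - S (w x)) < e'"
    using ucont[OF Swc e'pos] by blast
  obtain d3 where d3: "d3 > 0" "\<forall>x\<in>{s..t}. \<forall>y\<in>{s..t}. \<bar>y - x\<bar> < d3 \<longrightarrow> norm (u' y - u' x) < e'"
    using ucont[OF u'c e'pos] by blast
  define d where "d = min d1 (min d2 d3)"
  have dpos: "d > 0" using d1 d2 d3 by (simp add: d_def)
  show ?thesis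
  proof (intro exI[of _ d] conjI allI impI dpos)
    fix x y assume xy: "s \<le> x" "x \<le> y" "y \<le> t" "y - x < d"
    have sub: "{x..y} \<subseteq> {s..t}" using xy by auto
    have xin: "x \<in> {s..t}" and yin: "y \<in> {s..t}" using xy by auto
    define f where "f = (\<lambda>r. inner (S (u r)) (S (w r)) + inner (blinfun_apply g (u' r)) (w r) - inner (u' r) (w' r))"
    define c1 where "c1 = (\<lambda>r. inner (S (u r)) (S (w x)) + inner (blinfun_apply g (u' r)) (w x))"
    define D where "D = (\<lambda>r. inner (S (u r)) (S (w r) - S (w x)) + inner (blinfun_apply g (u' r)) (w r - w x) + inner (u' y - u' r) (w' r))"
    have gc: "continuous_on {x..y} (\<lambda>r. blinfun_apply g (u' r))"
      by (intro continuous_intros continuous_on_subset[OF u'c sub])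
    have fc: "continuous_on {x..y} f" unfolding f_def
      by (intro continuous_intros continuous_on_subset[OF Suc sub] continuous_on_subset[OF Swc sub]
           continuous_on_subset[OF u'c sub] continuous_on_subset[OF wc sub] continuous_on_subset[OF w'c sub] gc)
    have c1c: "continuous_on {x..y} c1" unfolding c1_def
      by (intro continuous_intros continuous_on_subset[OF Suc sub] gc)
    have Dc: "continuous_on {x..y} D" unfolding D_def
      by (intro continuous_intros continuous_on_subset[OF Suc sub] continuous_on_subset[OF Swc sub]
           continuous_on_subset[OF u'c sub] continuous_on_subset[OF wc sub] continuous_on_subset[OF w'c sub] gc)
    have fi: "f integrable_on {x..y}" using fc integrable_continuous_real by blast
    have c1i: "c1 integrable_on {x..y}" using c1c integrable_continuous_real by blast
    have lin0: "((\<lambda>r. inner (u' y) (w' r)) has_integral (inner (u' y) (w y) - inner (u' y) (w x))) {x..y}"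
    proof (rule fundamental_theorem_of_calculus[OF xy(2)])
      fix r assume r: "r \<in> {x..y}"
      then have "(w has_vector_derivative w' r) (at r within {x..y})"
        using sub by (intro has_vector_derivative_within_subset[OF wd]) auto
      then show "((\<lambda>r. inner (u' y) (w r)) has_vector_derivative inner (u' y) (w' r)) (at r within {x..y})"
        by (rule bounded_linear.has_vector_derivative[OF bounded_linear_inner_right])
    qed
    have lin: "((\<lambda>r. inner (u' y) (w' r)) has_integral inner (u' y) (w y - w x)) {x..y}"
      using lin0 by (simp add: inner_diff_right)
    have Deq: "\<And>r. D r = f r - c1 r + inner (u' y) (w' r)"
      unfolding D_def f_def c1_def by (simp add: inner_diff_left inner_diff_right)
    have intD: "integral {x..y} D = integral {x..y} f - integral {x..y} c1 + inner (u' y) (w y - w x)"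
    proof -
      have "(D has_integral (integral {x..y} f - integral {x..y} c1 + inner (u' y) (w y - w x))) {x..y}"
        unfolding Deq by (intro has_integral_add has_integral_diff lin integrable_integral fi c1i)
      then show ?thesis by (rule integral_unique)
    qed
    have W1: "\<bar>inner (u' y - u' x) (w x) + integral {x..y} c1\<bar> \<le> norm (w x) * integral {x..y} (\<lambda>r. a * norm (u r))"
      using W[OF wDS[OF xin], of x y] xy st unfolding c1_def by simp
    have split: "inner (u' y) (w y) - inner (u' x) (w x) + integral {x..y} f
        = (inner (u' y - u' x) (w x) + integral {x..y} c1) + integral {x..y} D"
      unfolding intD by (simp add: inner_diff_left inner_diff_right)
    show "\<bar>inner (u' y) (w y) - inner (u' x) (w x) + integral {x..y} f\<bar> \<le> integral {x..y} (\<lambda>r. a * norm (u r) * norm (w r)) + e * (y - x)"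
    proof -
      define Bd where "Bd = (\<lambda>r. a * norm (u r) * norm (w r - w x) + norm (S (u r)) * norm (S (w r) - S (w x))
         + norm g * norm (u' r) * norm (w r - w x) + norm (u' y - u' r) * norm (w' r))"
      have ucs: "continuous_on {x..y} u" using continuous_on_subset[OF uc sub] .
      have Bdc: "continuous_on {x..y} Bd" unfolding Bd_def
        by (intro continuous_intros continuous_on_subset[OF Suc sub] continuous_on_subset[OF Swc sub]
           continuous_on_subset[OF u'c sub] continuous_on_subset[OF wc sub] continuous_on_subset[OF w'c sub] ucs)
      have Bdi: "Bd integrable_on {x..y}" using Bdc integrable_continuous_real by blast
      have auc: "continuous_on {x..y} (\<lambda>r. a * norm (u r))" by (intro continuous_intros ucs)
      have auwc: "continuous_on {x..y} (\<lambda>r. a * norm (u r) * norm (w r))"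
        by (intro continuous_intros ucs continuous_on_subset[OF wc sub])
      have auwxc: "continuous_on {x..y} (\<lambda>r. a * norm (u r) * norm (w r - w x))"
        by (intro continuous_intros ucs continuous_on_subset[OF wc sub])
      have auwi: "(\<lambda>r. a * norm (u r) * norm (w r)) integrable_on {x..y}" using auwc integrable_continuous_real by blast
      have auwxi: "(\<lambda>r. a * norm (u r) * norm (w r - w x)) integrable_on {x..y}" using auwxc integrable_continuous_real by blast
      have Di: "D integrable_on {x..y}" using Dc integrable_continuous_real by blast
      have Dle: "norm (D r) \<le> Bd r - a * norm (u r) * norm (w r - w x)" for r
      proof -
        have 1: "\<bar>inner (S (u r)) (S (w r) - S (w x))\<bar> \<le> norm (S (u r)) * norm (S (w r) - S (w x))"
          by (rule Cauchy_Schwarz_ineq2)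
        have 2: "\<bar>inner (blinfun_apply g (u' r)) (w r - w x)\<bar> \<le> norm g * norm (u' r) * norm (w r - w x)"
        proof -
          have "\<bar>inner (blinfun_apply g (u' r)) (w r - w x)\<bar> \<le> norm (blinfun_apply g (u' r)) * norm (w r - w x)"
            by (rule Cauchy_Schwarz_ineq2)
          also have "\<dots> \<le> norm g * norm (u' r) * norm (w r - w x)"
            by (intro mult_right_mono norm_blinfun) auto
          finally show ?thesis .
        qed
        have 3: "\<bar>inner (u' y - u' r) (w' r)\<bar> \<le> norm (u' y - u' r) * norm (w' r)"
          by (rule Cauchy_Schwarz_ineq2)
        show ?thesis using 1 2 3 unfolding D_def Bd_def by simp
      qed
      have Bdle: "Bd r \<le> e" if r: "r \<in> {x..y}" for r
      proof -
        have rin: "r \<in> {s..t}" using r sub by auto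
        have rx: "\<bar>r - x\<bar> < d" "\<bar>y - r\<bar> < d" using r xy by auto
        have n1: "norm (w r - w x) \<le> e'" using d1(2) xin rin rx unfolding d_def by (meson less_imp_le min.strict_boundedE)
        have n2: "norm (S (w r) - S (w x)) \<le> e'" using d2(2) xin rin rx unfolding d_def by (meson less_imp_le min.strict_boundedE)
        have n3: "norm (u' y - u' r) \<le> e'" using d3(2) yin rin rx unfolding d_def by (meson less_imp_le min.strict_boundedE)
        have b1: "norm (u r) \<le> \<bar>B1\<bar>" using B1 rin by fastforce
        have b2: "norm (S (u r)) \<le> \<bar>B2\<bar>" using B2 rin by fastforce
        have b3: "norm (u' r) \<le> \<bar>B3\<bar>" using B3 rin by fastforce
        have b4: "norm (w' r) \<le> \<bar>B4\<bar>" using B4 rin by fastforce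
        have "a * norm (u r) * norm (w r - w x) \<le> a * \<bar>B1\<bar> * e'"
          using a_nn b1 n1 by (intro mult_mono mult_left_mono) auto
        moreover have "norm (S (u r)) * norm (S (w r) - S (w x)) \<le> \<bar>B2\<bar> * e'"
          using b2 n2 by (intro mult_mono) auto
        moreover have "norm g * norm (u' r) * norm (w r - w x) \<le> norm g * \<bar>B3\<bar> * e'"
          using b3 n1 by (intro mult_mono mult_left_mono) auto
        moreover have "norm (u' y - u' r) * norm (w' r) \<le> e' * \<bar>B4\<bar>"
          using b4 n3 e'pos by (intro mult_mono) auto
        ultimately have "Bd r \<le> (a * \<bar>B1\<bar> + \<bar>B2\<bar> + norm g * \<bar>B3\<bar> + \<bar>B4\<bar>) * e'"
          unfolding Bd_def by (simp add: algebra_simps)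
        also have "\<dots> \<le> C * e'" using e'pos unfolding C_def by (intro mult_right_mono) auto
        also have "\<dots> = e" using Cpos unfolding e'_def by simp
        finally show ?thesis .
      qed
      have iBd: "integral {x..y} Bd \<le> e * (y - x)"
      proof -
        have "integral {x..y} Bd \<le> integral {x..y} (\<lambda>r. e)"
          by (rule integral_le[OF Bdi]) (use Bdle in auto)
        also have "\<dots> = e * (y - x)" using xy by simp
        finally show ?thesis .
      qed
      have iD: "\<bar>integral {x..y} D\<bar> \<le> integral {x..y} Bd - integral {x..y} (\<lambda>r. a * norm (u r) * norm (w r - w x))"
      proof -
        have "norm (integral {x..y} D) \<le> integral {x..y} (\<lambda>r. Bd r - a * norm (u r) * norm (w r - w x))"
          using Dle by (intro integral_norm_bound_integral[OF Di integrable_diff[OF Bdi auwxi]]) simp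
        also have "\<dots> = integral {x..y} Bd - integral {x..y} (\<lambda>r. a * norm (u r) * norm (w r - w x))"
          by (rule integral_diff[OF Bdi auwxi])
        finally show ?thesis by simp
      qed
      have iE: "norm (w x) * integral {x..y} (\<lambda>r. a * norm (u r)) \<le>
          integral {x..y} (\<lambda>r. a * norm (u r) * norm (w r)) + integral {x..y} (\<lambda>r. a * norm (u r) * norm (w r - w x))"
      proof -
        have "norm (w x) * integral {x..y} (\<lambda>r. a * norm (u r)) = integral {x..y} (\<lambda>r. a * norm (u r) * norm (w x))"
          by (simp add: mult.commute)
        also have "\<dots> \<le> integral {x..y} (\<lambda>r. a * norm (u r) * norm (w r) + a * norm (u r) * norm (w r - w x))"
        proof (rule integral_le)
          show "(\<lambda>r. a * norm (u r) * norm (w x)) integrable_on {x..y}"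
            using auc integrable_continuous_real integrable_on_mult_left by blast
          show "(\<lambda>r. a * norm (u r) * norm (w r) + a * norm (u r) * norm (w r - w x)) integrable_on {x..y}"
            using auwi auwxi by (rule integrable_add)
          fix r
          have "norm (w x) \<le> norm (w r) + norm (w x - w r)" using norm_triangle_ineq[of "w r" "w x - w r"] by simp
          then have "norm (w x) \<le> norm (w r) + norm (w r - w x)" by (simp add: norm_minus_commute)
          then have "a * norm (u r) * norm (w x) \<le> a * norm (u r) * (norm (w r) + norm (w r - w x))"
            using a_nn by (intro mult_left_mono) auto
          then show "a * norm (u r) * norm (w x) \<le> a * norm (u r) * norm (w r) + a * norm (u r) * norm (w r - w x)"
            by (simp add: algebra_simps)
        qed
        also have "\<dots> = integral {x..y} (\<lambda>r. a * norm (u r) * norm (w r)) + integral {x..y} (\<lambda>r. a * norm (u r) * norm (w r - w x))"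
          by (rule integral_add[OF auwi auwxi])
        finally show ?thesis .
      qed
      show ?thesis unfolding f_def[symmetric] split using W1 iD iE iBd by linarith
    qed
  qed
qed


lemma PR:
  fixes w w' :: "real \<Rightarrow> 'h"
  assumes st: "0 \<le> s" "s \<le> t"
    and wDS: "\<And>r. r \<in> {s..t} \<Longrightarrow> w r \<in> DS"
    and Swc: "continuous_on {s..t} (\<lambda>r. S (w r))"
    and wd: "\<And>r. r \<in> {s..t} \<Longrightarrow> (w has_vector_derivative w' r) (at r within {s..t})"
    and w'c: "continuous_on {s..t} w'"
  shows "\<bar>inner (u' t) (w t) - inner (u' s) (w s) + integral {s..t} (\<lambda>r. inner (S (u r)) (S (w r)) + inner (blinfun_apply g (u' r)) (w r) - inner (u' r) (w' r))\<bar>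
       \<le> integral {s..t} (\<lambda>r. a * norm (u r) * norm (w r))"
proof -
  define f where "f = (\<lambda>r. inner (S (u r)) (S (w r)) + inner (blinfun_apply g (u' r)) (w r) - inner (u' r) (w' r))"
  define h where "h = (\<lambda>r. a * norm (u r) * norm (w r))"
  have wc: "continuous_on {s..t} w"
    using wd by (metis continuous_on_eq_continuous_within has_vector_derivative_continuous)
  have uc: "continuous_on {s..t} u" using cont_sub[OF st(1) u_cont] .
  have Suc: "continuous_on {s..t} (\<lambda>r. S (u r))" using cont_sub[OF st(1) Su_cont] .
  have u'c: "continuous_on {s..t} u'" using cont_sub[OF st(1) u'_cont] .
  have gc: "continuous_on {s..t} (\<lambda>r. blinfun_apply g (u' r))"
    by (intro continuous_intros u'c)
  have fc: "continuous_on {s..t} f" unfolding f_def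
    by (intro continuous_intros Suc Swc u'c wc w'c gc)
  have hc: "continuous_on {s..t} h" unfolding h_def
    by (intro continuous_intros uc wc)
  have fi: "f integrable_on {s..y}" if "y \<le> t" for y
    using continuous_on_subset[OF fc] that integrable_continuous_real by (metis atLeastatMost_subset_iff order_refl)
  have hi: "h integrable_on {s..y}" if "y \<le> t" for y
    using continuous_on_subset[OF hc] that integrable_continuous_real by (metis atLeastatMost_subset_iff order_refl)
  define \<Phi> where "\<Phi> = (\<lambda>\<tau>. inner (u' \<tau>) (w \<tau>) + integral {s..\<tau>} f)"
  define \<Psi> where "\<Psi> = (\<lambda>\<tau>. integral {s..\<tau>} h)"
  have dif: "\<Phi> y - \<Phi> x = inner (u' y) (w y) - inner (u' x) (w x) + integral {x..y} f"
    "\<Psi> y - \<Psi> x = integral {x..y} h"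
    if "s \<le> x" "x \<le> y" "y \<le> t" for x y
  proof -
    have "integral {s..x} f + integral {x..y} f = integral {s..y} f"
      using that fi by (intro Henstock_Kurzweil_Integration.integral_combine) auto
    then show "\<Phi> y - \<Phi> x = inner (u' y) (w y) - inner (u' x) (w x) + integral {x..y} f"
      unfolding \<Phi>_def by simp
    have "integral {s..x} h + integral {x..y} h = integral {s..y} h"
      using that hi by (intro Henstock_Kurzweil_Integration.integral_combine) auto
    then show "\<Psi> y - \<Psi> x = integral {x..y} h"
      unfolding \<Psi>_def by simp
  qed
  have loc: "\<exists>d>0. \<forall>x y. s \<le> x \<longrightarrow> x \<le> y \<longrightarrow> y \<le> t \<longrightarrow> y - x < d \<longrightarrow> \<bar>\<Phi> y - \<Phi> x\<bar> \<le> \<Psi> y - \<Psi> x + e * (y - x)"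
    if e: "e > 0" for e
  proof -
    obtain d where d: "d > 0" and dd: "\<forall>x y. s \<le> x \<longrightarrow> x \<le> y \<longrightarrow> y \<le> t \<longrightarrow> y - x < d \<longrightarrow>
     \<bar>inner (u' y) (w y) - inner (u' x) (w x) + integral {x..y} f\<bar> \<le> integral {x..y} h + e * (y - x)"
      using PR_local[OF st wDS Swc wd w'c e] unfolding f_def h_def by blast
    show ?thesis using d dd dif by (intro exI[of _ d]) auto
  qed
  have A: "\<Phi> t - \<Phi> s \<le> \<Psi> t - \<Psi> s"
    by (rule local_to_global[OF st(2)]) (use loc in \<open>fastforce simp: abs_le_iff\<close>)
  have B: "(- \<Phi> t) - (- \<Phi> s) \<le> \<Psi> t - \<Psi> s"
    by (rule local_to_global[OF st(2), where F="\<lambda>x. - \<Phi> x"]) (use loc in \<open>fastforce simp: abs_le_iff\<close>)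
  have "\<Phi> t - \<Phi> s = inner (u' t) (w t) - inner (u' s) (w s) + integral {s..t} f" using dif[of s t] st by simp
  moreover have "\<Psi> t - \<Psi> s = integral {s..t} h" using dif[of s t] st by simp
  ultimately show ?thesis using A B unfolding f_def[symmetric] h_def[symmetric] by linarith
qed

end

lemma tendsto_at_right0I:
  fixes F :: "real \<Rightarrow> real"
  assumes "\<And>e. e > 0 \<Longrightarrow> \<exists>d>0. \<forall>h. 0 < h \<longrightarrow> h < d \<longrightarrow> \<bar>F h - L\<bar> \<le> e"
  shows "(F \<longlongrightarrow> L) (at_right 0)"
proof (rule tendstoI)
  fix e :: real assume e: "e > 0"
  obtain d where d: "d > 0" "\<forall>h. 0 < h \<longrightarrow> h < d \<longrightarrow> \<bar>F h - L\<bar> \<le> e/2" using assms[of "e/2"] e by auto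
  show "\<forall>\<^sub>F x in at_right 0. dist (F x) L < e"
    unfolding eventually_at_right[OF d(1)] using d e by (intro exI[of _ d]) (auto simp: dist_real_def)
qed

lemma avg_bound:
  fixes P :: "real \<Rightarrow> real"
  assumes h: "h > 0" and Pc: "continuous_on {x-h..x} P" and b: "\<And>r. r \<in> {x-h..x} \<Longrightarrow> \<bar>P r - c\<bar> \<le> e"
  shows "\<bar>integral {x-h..x} P / h - c\<bar> \<le> e"
proof -
  have Pi: "P integrable_on {x-h..x}" using Pc integrable_continuous_real by blast
  have "integral {x-h..x} (\<lambda>r. P r - c) = integral {x-h..x} P - h * c"
    using integral_diff[OF Pi integrable_const_ivl[of c "x-h" x]] h by simp
  moreover have "norm (integral {x-h..x} (\<lambda>r. P r - c)) \<le> integral {x-h..x} (\<lambda>r. e)"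
    using b by (intro integral_norm_bound_integral integrable_diff Pi) auto
  ultimately have "\<bar>integral {x-h..x} P - h * c\<bar> \<le> h * e" using h by simp
  then have "\<bar>(integral {x-h..x} P - h * c) / h\<bar> \<le> e" using h by (simp add: field_simps abs_divide)
  moreover have "(integral {x-h..x} P - h * c) / h = integral {x-h..x} P / h - c" using h by (simp add: field_simps)
  ultimately show ?thesis by simp
qed

lemma shift_limit:
  fixes \<phi> :: "real \<Rightarrow> 'a::real_inner"
  assumes \<phi>c: "continuous_on {0..} \<phi>" and st: "0 < s" "s \<le> t"
  shows "((\<lambda>h. integral {s..t} (\<lambda>r. inner (\<phi> r) ((1/(2*h)) *\<^sub>R (\<phi> (r+h) - \<phi> (r-h)))))
           \<longlongrightarrow> ((norm (\<phi> t))\<^sup>2 - (norm (\<phi> s))\<^sup>2) / 2) (at_right 0)"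
proof (rule tendsto_at_right0I)
  fix e :: real assume e: "e > 0"
  have \<phi>c2: "continuous_on {0..t+s} \<phi>" using \<phi>c by (rule continuous_on_subset) auto
  obtain B where B: "\<forall>x\<in>{0..t+s}. norm (\<phi> x) \<le> B" using cont_bound[OF \<phi>c2] by blast
  define e' where "e' = e / (4 * \<bar>B\<bar> + 1)"
  have e'pos: "e' > 0" using e by (simp add: e'_def add_nonneg_pos)
  obtain d where d: "d > 0" "\<forall>x\<in>{0..t+s}. \<forall>y\<in>{0..t+s}. \<bar>y - x\<bar> < d \<longrightarrow> norm (\<phi> y - \<phi> x) < e'"
    using ucont[OF \<phi>c2 e'pos] by blast
  show "\<exists>d>0. \<forall>h. 0 < h \<longrightarrow> h < d \<longrightarrow> \<bar>integral {s..t} (\<lambda>r. inner (\<phi> r) ((1/(2*h)) *\<^sub>R (\<phi> (r+h) - \<phi> (r-h))))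
           - ((norm (\<phi> t))\<^sup>2 - (norm (\<phi> s))\<^sup>2) / 2\<bar> \<le> e"
  proof (intro exI[of _ "min d s"] conjI allI impI)
    show "min d s > 0" using d st by simp
    fix h assume h0: "0 < h" and hd: "h < min d s"
    define P where "P = (\<lambda>r. inner (\<phi> r) (\<phi> (r + h)))"
    have Pc: "continuous_on {s-h..t} P" unfolding P_def
      using h0 hd st
      by (intro continuous_intros continuous_on_subset[OF \<phi>c] continuous_on_compose2[OF \<phi>c]) auto
    have Pi: "P integrable_on {s-h..t}" using Pc integrable_continuous_real by blast
    have Qc: "continuous_on {s..t} (\<lambda>r. inner (\<phi> r) (\<phi> (r - h)))"
      using h0 hd st
      by (intro continuous_intros continuous_on_subset[OF \<phi>c] continuous_on_compose2[OF \<phi>c]) auto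
    have P2c: "continuous_on {s..t} P" using continuous_on_subset[OF Pc] h0 by auto
    have eq1: "integral {s..t} (\<lambda>r. inner (\<phi> r) ((1/(2*h)) *\<^sub>R (\<phi> (r+h) - \<phi> (r-h))))
       = (1/(2*h)) * (integral {s..t} P - integral {s..t} (\<lambda>r. inner (\<phi> r) (\<phi> (r - h))))"
    proof -
      have "integral {s..t} (\<lambda>r. inner (\<phi> r) ((1/(2*h)) *\<^sub>R (\<phi> (r+h) - \<phi> (r-h))))
          = integral {s..t} (\<lambda>r. (1/(2*h)) * (P r - inner (\<phi> r) (\<phi> (r - h))))"
        unfolding P_def by (simp add: inner_diff_right)
      also have "\<dots> = (1/(2*h)) * integral {s..t} (\<lambda>r. P r - inner (\<phi> r) (\<phi> (r - h)))"
        by simp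
      also have "integral {s..t} (\<lambda>r. P r - inner (\<phi> r) (\<phi> (r - h))) = integral {s..t} P - integral {s..t} (\<lambda>r. inner (\<phi> r) (\<phi> (r - h)))"
        using P2c Qc integrable_continuous_real by (intro integral_diff) auto
      finally show ?thesis .
    qed
    have eq2: "integral {s..t} (\<lambda>r. inner (\<phi> r) (\<phi> (r - h))) = integral {s-h..t-h} P"
    proof -
      have "integral {s..t} (P \<circ> (+) (-h)) = integral {s + -h..t + -h} P" by (rule integral_shift_Icc_real)
      moreover have "(P \<circ> (+) (-h)) = (\<lambda>r. inner (\<phi> r) (\<phi> (r - h)))"
        unfolding P_def by (auto simp: inner_commute)
      ultimately show ?thesis by simp
    qed
    have eq3: "integral {s..t} P - integral {s-h..t-h} P = integral {t-h..t} P - integral {s-h..s} P"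
    proof -
      have "integral {s-h..s} P + integral {s..t} P = integral {s-h..t} P"
        using h0 st by (intro Henstock_Kurzweil_Integration.integral_combine Pi) auto
      moreover have "integral {s-h..t-h} P + integral {t-h..t} P = integral {s-h..t} P"
        using h0 st by (intro Henstock_Kurzweil_Integration.integral_combine Pi) auto
      ultimately show ?thesis by linarith
    qed
    have avg: "\<bar>integral {x-h..x} P / h - (norm (\<phi> x))\<^sup>2\<bar> \<le> e / 2" if x: "x \<in> {s, t}" for x
    proof (rule avg_bound[OF h0])
      show "continuous_on {x-h..x} P" using x st h0 by (intro continuous_on_subset[OF Pc]) auto
      fix r assume r: "r \<in> {x-h..x}"
      have rin: "r \<in> {0..t+s}" "r + h \<in> {0..t+s}" "x \<in> {0..t+s}" using r x st hd h0 by auto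
      have n1: "norm (\<phi> r - \<phi> x) \<le> e'" using d(2) rin r hd by (intro less_imp_le) (auto simp: abs_if)
      have n2: "norm (\<phi> (r + h) - \<phi> x) \<le> e'" using d(2) rin r hd by (intro less_imp_le) (auto simp: abs_if)
      have b1: "norm (\<phi> (r + h)) \<le> \<bar>B\<bar>" "norm (\<phi> x) \<le> \<bar>B\<bar>" using B rin by fastforce+
      have "P r - (norm (\<phi> x))\<^sup>2 = inner (\<phi> r - \<phi> x) (\<phi> (r + h)) + inner (\<phi> x) (\<phi> (r + h) - \<phi> x)"
        unfolding P_def by (simp add: inner_diff_left inner_diff_right power2_norm_eq_inner)
      then have "\<bar>P r - (norm (\<phi> x))\<^sup>2\<bar> \<le> norm (\<phi> r - \<phi> x) * norm (\<phi> (r + h)) + norm (\<phi> x) * norm (\<phi> (r + h) - \<phi> x)"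
        using Cauchy_Schwarz_ineq2[of "\<phi> r - \<phi> x" "\<phi> (r + h)"] Cauchy_Schwarz_ineq2[of "\<phi> x" "\<phi> (r + h) - \<phi> x"] by linarith
      also have "\<dots> \<le> e' * \<bar>B\<bar> + \<bar>B\<bar> * e'"
        using n1 n2 b1 e'pos by (intro add_mono mult_mono) auto
      also have "\<dots> \<le> e / 2"
      proof -
        have "e' * \<bar>B\<bar> + \<bar>B\<bar> * e' = 2 * \<bar>B\<bar> * e / (4 * \<bar>B\<bar> + 1)" unfolding e'_def by simp
        also have "\<dots> \<le> e / 2" using e by (simp add: field_simps)
        finally show ?thesis .
      qed
      finally show "\<bar>P r - (norm (\<phi> x))\<^sup>2\<bar> \<le> e / 2" .
    qed
    define X where "X = integral {s..t} (\<lambda>r. inner (\<phi> r) ((1/(2*h)) *\<^sub>R (\<phi> (r+h) - \<phi> (r-h))))"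
    define At where "At = integral {t-h..t} P / h"
    define As where "As = integral {s-h..s} P / h"
    have eqX: "X = (At - As) / 2"
      unfolding X_def At_def As_def eq1 eq2 eq3 using h0 by (simp add: field_simps)
    have a1: "\<bar>As - (norm (\<phi> s))\<^sup>2\<bar> \<le> e / 2" unfolding As_def using avg[of s] by simp
    have a2: "\<bar>At - (norm (\<phi> t))\<^sup>2\<bar> \<le> e / 2" unfolding At_def using avg[of t] by simp
    have "\<bar>X - ((norm (\<phi> t))\<^sup>2 - (norm (\<phi> s))\<^sup>2) / 2\<bar> \<le> e"
      using abs_le_D1[OF a1] abs_le_D2[OF a1] abs_le_D1[OF a2] abs_le_D2[OF a2] eqX e
      by (intro abs_leI) argo+
    then show "\<bar>integral {s..t} (\<lambda>r. inner (\<phi> r) ((1/(2*h)) *\<^sub>R (\<phi> (r+h) - \<phi> (r-h))))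
           - ((norm (\<phi> t))\<^sup>2 - (norm (\<phi> s))\<^sup>2) / 2\<bar> \<le> e" unfolding X_def .
  qed
qed


lemma unif_int_limit:
  fixes F :: "real \<Rightarrow> real \<Rightarrow> real"
  assumes st: "s \<le> t"
    and Fi: "\<And>h. 0 < h \<Longrightarrow> h < d0 \<Longrightarrow> F h integrable_on {s..t}"
    and d0: "d0 > 0"
    and F0i: "F0 integrable_on {s..t}"
    and U: "\<And>e. e > 0 \<Longrightarrow> \<exists>d>0. \<forall>h. 0 < h \<longrightarrow> h < d \<longrightarrow> (\<forall>r\<in>{s..t}. \<bar>F h r - F0 r\<bar> \<le> e)"
  shows "((\<lambda>h. integral {s..t} (F h)) \<longlongrightarrow> integral {s..t} F0) (at_right 0)"
proof (rule tendsto_at_right0I)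
  fix e :: real assume e: "e > 0"
  obtain d where d: "d > 0" "\<forall>h. 0 < h \<longrightarrow> h < d \<longrightarrow> (\<forall>r\<in>{s..t}. \<bar>F h r - F0 r\<bar> \<le> e / (t - s + 1))"
    using U[of "e / (t - s + 1)"] e st by auto
  show "\<exists>d>0. \<forall>h. 0 < h \<longrightarrow> h < d \<longrightarrow> \<bar>integral {s..t} (F h) - integral {s..t} F0\<bar> \<le> e"
  proof (intro exI[of _ "min d d0"] conjI allI impI)
    show "min d d0 > 0" using d d0 by simp
    fix h assume h: "0 < h" "h < min d d0"
    have Fhi: "F h integrable_on {s..t}" using Fi h by simp
    have "integral {s..t} (F h) - integral {s..t} F0 = integral {s..t} (\<lambda>r. F h r - F0 r)"
      by (rule integral_diff[symmetric, OF Fhi F0i])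
    moreover have "norm (integral {s..t} (\<lambda>r. F h r - F0 r)) \<le> integral {s..t} (\<lambda>r. e / (t - s + 1))"
      using d h by (intro integral_norm_bound_integral integrable_diff Fhi F0i) auto
    moreover have "integral {s..t} (\<lambda>r. e / (t - s + 1)) \<le> e" using st e by (simp add: field_simps)
    ultimately show "\<bar>integral {s..t} (F h) - integral {s..t} F0\<bar> \<le> e" by simp
  qed
qed

context wsol begin

definition wh :: "real \<Rightarrow> real \<Rightarrow> 'h" where
  "wh h r = (1/(2*h)) *\<^sub>R (u (r + h) - u (r - h))"

lemma wh_unif:
  assumes st: "0 < s" "s \<le> t" and e: "e > 0"
  shows "\<exists>d>0. \<forall>h. 0 < h \<longrightarrow> h < d \<longrightarrow> (\<forall>r\<in>{s..t}. norm (wh h r - u' r) \<le> e)"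
proof -
  have c2: "continuous_on {0..t+s} u'" using u'_cont by (rule continuous_on_subset) auto
  obtain d where d: "d > 0" "\<forall>x\<in>{0..t+s}. \<forall>y\<in>{0..t+s}. \<bar>y - x\<bar> < d \<longrightarrow> norm (u' y - u' x) < e"
    using ucont[OF c2 e] by blast
  show ?thesis
  proof (intro exI[of _ "min d s"] conjI allI impI ballI)
    show "min d s > 0" using d st by simp
    fix h r assume h: "0 < h" "h < min d s" and r: "r \<in> {s..t}"
    have der: "(u has_vector_derivative u' x) (at x within {r-h..r+h})" if "x \<in> {r-h..r+h}" for x
      using that h r st by (intro has_vector_derivative_within_subset[OF u_der]) auto
    have seg: "closed_segment (r - h) (r + h) \<subseteq> {r-h..r+h}" using h by (simp add: closed_segment_eq_real_ivl)
    have B: "norm (u' x - u' r) \<le> e" if "x \<in> {r-h..r+h}" for x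
      using d(2) that h r st by (intro less_imp_le) (auto simp: abs_if)
    have "norm (u (r + h) - u (r - h) - ((r + h) - (r - h)) *\<^sub>R u' r) \<le> norm ((r + h) - (r - h)) * e"
      by (rule vector_differentiable_bound_linearization[OF der seg B]) (use h in auto)
    then have "norm (u (r + h) - u (r - h) - (2*h) *\<^sub>R u' r) \<le> 2 * h * e" using h by simp
    moreover have "wh h r - u' r = (1/(2*h)) *\<^sub>R (u (r + h) - u (r - h) - (2*h) *\<^sub>R u' r)"
      unfolding wh_def using h by (simp add: algebra_simps)
    ultimately show "norm (wh h r - u' r) \<le> e" using h
      by (simp add: divide_le_eq mult.commute)
  qed
qed

lemma shift_der:
  assumes "\<And>r. r \<in> {s..t} \<Longrightarrow> r + c \<ge> 0" and r: "r \<in> {s..t}"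
  shows "((\<lambda>r. u (r + c)) has_vector_derivative u' (r + c)) (at r within {s..t})"
proof -
  have 1: "((\<lambda>r. r + c) has_vector_derivative 1) (at r within {s..t})"
    by (auto intro!: derivative_eq_intros)
  have 2: "(u has_vector_derivative u' (r + c)) (at (r + c) within (\<lambda>r. r + c) ` {s..t})"
    using assms by (intro has_vector_derivative_within_subset[OF u_der]) auto
  show ?thesis using vector_diff_chain_within[OF 1 2] by (simp add: o_def)
qed

lemma energy:
  assumes st: "0 < s" "s \<le> t"
  shows "\<bar>((norm (S (u t)))\<^sup>2 + (norm (u' t))\<^sup>2 - ((norm (S (u s)))\<^sup>2 + (norm (u' s))\<^sup>2)) / 2
            + integral {s..t} (\<lambda>r. inner (blinfun_apply g (u' r)) (u' r))\<bar>
         \<le> integral {s..t} (\<lambda>r. a * norm (u r) * norm (u' r))"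
proof -
  define wh' where "wh' h r = (1/(2*h)) *\<^sub>R (u' (r + h) - u' (r - h))" for h r
  define f3 where "f3 h r = inner (S (u r)) (S (wh h r))" for h r
  define f4 where "f4 h r = inner (blinfun_apply g (u' r)) (wh h r)" for h r
  define f5 where "f5 h r = inner (u' r) (wh' h r)" for h r
  define X where "X h = inner (u' t) (wh h t) - inner (u' s) (wh h s) + integral {s..t} (\<lambda>r. f3 h r + f4 h r - f5 h r)" for h
  define Y where "Y h = integral {s..t} (\<lambda>r. a * norm (u r) * norm (wh h r))" for h
  have uc: "continuous_on {s..t} u" using cont_sub[of s u t] u_cont st by simp
  have Suc: "continuous_on {s..t} (\<lambda>r. S (u r))" using cont_sub[of s _ t] Su_cont st by simp
  have u'c: "continuous_on {s..t} u'" using cont_sub[of s u' t] u'_cont st by simp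
  have Swh: "S (wh h r) = (1/(2*h)) *\<^sub>R (S (u (r + h)) - S (u (r - h)))"
    if h: "0 < h" "h \<le> s" and r: "r \<in> {s..t}" for h r
  proof -
    have "u (r + h) \<in> DS" "u (r - h) \<in> DS" using h r st by (auto intro!: uDS)
    then show ?thesis unfolding wh_def using sub by (simp add: S_scale S_diff subspace_diff)
  qed
  have whDS: "wh h r \<in> DS" if h: "0 < h" "h \<le> s" and r: "r \<in> {s..t}" for h r
  proof -
    have "u (r + h) \<in> DS" "u (r - h) \<in> DS" using h r st by (auto intro!: uDS)
    then show ?thesis unfolding wh_def using sub by (simp add: subspace_diff subspace_scale)
  qed
  have whc: "continuous_on {s..t} (wh h)" if h: "0 < h" "h \<le> s" for h
    unfolding wh_def using h st
    by (intro continuous_intros continuous_on_compose2[OF u_cont]) auto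
  have Swhc: "continuous_on {s..t} (\<lambda>r. S (wh h r))" if h: "0 < h" "h \<le> s" for h
  proof -
    have "continuous_on {s..t} (\<lambda>r. (1/(2*h)) *\<^sub>R (S (u (r + h)) - S (u (r - h))))"
      using h st by (intro continuous_intros continuous_on_compose2[OF Su_cont]) auto
    then show ?thesis using Swh[OF h] by (metis (no_types, lifting) continuous_on_cong)
  qed
  have wh'c: "continuous_on {s..t} (wh' h)" if h: "0 < h" "h \<le> s" for h
    unfolding wh'_def using h st
    by (intro continuous_intros continuous_on_compose2[OF u'_cont]) auto
  have whd: "(wh h has_vector_derivative wh' h r) (at r within {s..t})" if h: "0 < h" "h \<le> s" and r: "r \<in> {s..t}" for h r
  proof -
    have d1: "((\<lambda>r. u (r + h)) has_vector_derivative u' (r + h)) (at r within {s..t})"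
      using h st r by (intro shift_der) auto
    have d2: "((\<lambda>r. u (r + (-h))) has_vector_derivative u' (r + (-h))) (at r within {s..t})"
      using h st r by (intro shift_der) auto
    have "((\<lambda>r. u (r + h) - u (r + (-h))) has_vector_derivative (u' (r + h) - u' (r + (-h)))) (at r within {s..t})"
      by (rule has_vector_derivative_diff[OF d1 d2])
    from bounded_linear.has_vector_derivative[OF bounded_linear_scaleR_right this, of "1/(2*h)"]
    show ?thesis unfolding wh_def wh'_def by simp
  qed
  have PRh: "\<bar>X h\<bar> \<le> Y h" if h: "0 < h" "h \<le> s" for h
    using PR[of s t "wh h" "wh' h"] st whDS[OF h] Swhc[OF h] whd[OF h] wh'c[OF h]
    unfolding X_def Y_def f3_def f4_def f5_def by auto
  have ev: "\<forall>\<^sub>F h in at_right 0. 0 < h \<and> h \<le> s"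
    using eventually_at_right_real[OF st(1)] by (rule eventually_mono) auto
  obtain B1 where B1: "\<forall>x\<in>{s..t}. norm (u x) \<le> B1" using cont_bound[OF uc] by blast
  obtain B3 where B3: "\<forall>x\<in>{s..t}. norm (u' x) \<le> B3" using cont_bound[OF u'c] by blast
  have lim1: "((\<lambda>h. inner (u' x) (wh h x)) \<longlongrightarrow> inner (u' x) (u' x)) (at_right 0)" if x: "x \<in> {s..t}" for x
  proof (rule tendsto_at_right0I)
    fix e :: real assume e: "e > 0"
    have e': "e / (norm (u' x) + 1) > 0" using e by (simp add: add_nonneg_pos)
    obtain d where d: "d > 0" "\<forall>h. 0 < h \<longrightarrow> h < d \<longrightarrow> (\<forall>r\<in>{s..t}. norm (wh h r - u' r) \<le> e / (norm (u' x) + 1))"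
      using wh_unif[OF st e'] by blast
    show "\<exists>d>0. \<forall>h. 0 < h \<longrightarrow> h < d \<longrightarrow> \<bar>inner (u' x) (wh h x) - inner (u' x) (u' x)\<bar> \<le> e"
    proof (intro exI[of _ d] conjI allI impI d(1))
      fix h assume h: "0 < h" "h < d"
      have "\<bar>inner (u' x) (wh h x) - inner (u' x) (u' x)\<bar> = \<bar>inner (u' x) (wh h x - u' x)\<bar>"
        by (simp add: inner_diff_right)
      also have "\<dots> \<le> norm (u' x) * norm (wh h x - u' x)" by (rule Cauchy_Schwarz_ineq2)
      also have "\<dots> \<le> norm (u' x) * (e / (norm (u' x) + 1))"
        using d(2) h x by (intro mult_left_mono) auto
      also have "\<dots> = e * (norm (u' x) / (norm (u' x) + 1))" by simp
      also have "\<dots> \<le> e * 1"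
      proof -
        have p: "0 < norm (u' x) + 1" by (simp add: add_nonneg_pos)
        have "norm (u' x) / (norm (u' x) + 1) \<le> 1" using p by (simp add: pos_divide_le_eq)
        then show ?thesis using e by (intro mult_left_mono) auto
      qed
      finally show "\<bar>inner (u' x) (wh h x) - inner (u' x) (u' x)\<bar> \<le> e" by simp
    qed
  qed
  have lim3: "((\<lambda>h. integral {s..t} (f3 h)) \<longlongrightarrow> ((norm (S (u t)))\<^sup>2 - (norm (S (u s)))\<^sup>2) / 2) (at_right 0)"
  proof (rule Lim_transform_eventually[OF shift_limit[OF Su_cont st]])
    show "\<forall>\<^sub>F h in at_right 0. integral {s..t} (\<lambda>r. inner (S (u r)) ((1/(2*h)) *\<^sub>R (S (u (r+h)) - S (u (r-h))))) = integral {s..t} (f3 h)"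
      using ev
    proof (rule eventually_mono)
      fix h assume h: "0 < h \<and> h \<le> s"
      show "integral {s..t} (\<lambda>r. inner (S (u r)) ((1/(2*h)) *\<^sub>R (S (u (r+h)) - S (u (r-h))))) = integral {s..t} (f3 h)"
        unfolding f3_def using Swh h by (intro integral_cong) auto
    qed
  qed
  have lim5: "((\<lambda>h. integral {s..t} (f5 h)) \<longlongrightarrow> ((norm (u' t))\<^sup>2 - (norm (u' s))\<^sup>2) / 2) (at_right 0)"
    using shift_limit[OF u'_cont st] unfolding f5_def wh'_def by simp
  have lim4: "((\<lambda>h. integral {s..t} (f4 h)) \<longlongrightarrow> integral {s..t} (\<lambda>r. inner (blinfun_apply g (u' r)) (u' r))) (at_right 0)"
  proof (rule unif_int_limit[OF st(2) _ st(1)])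
    show "f4 h integrable_on {s..t}" if "0 < h" "h < s" for h
      unfolding f4_def using that
      by (intro integrable_continuous_real continuous_intros u'c whc) auto
    show "(\<lambda>r. inner (blinfun_apply g (u' r)) (u' r)) integrable_on {s..t}"
      by (intro integrable_continuous_real continuous_intros u'c)
    fix e :: real assume e: "e > 0"
    define K where "K = norm g * \<bar>B3\<bar> + 1"
    have K: "K > 0" unfolding K_def by (simp add: add_nonneg_pos)
    obtain d where d: "d > 0" "\<forall>h. 0 < h \<longrightarrow> h < d \<longrightarrow> (\<forall>r\<in>{s..t}. norm (wh h r - u' r) \<le> e / K)"
      using wh_unif[OF st, of "e / K"] e K by auto
    show "\<exists>d>0. \<forall>h. 0 < h \<longrightarrow> h < d \<longrightarrow> (\<forall>r\<in>{s..t}. \<bar>f4 h r - inner (blinfun_apply g (u' r)) (u' r)\<bar> \<le> e)"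
    proof (intro exI[of _ d] conjI allI impI ballI d(1))
      fix h r assume h: "0 < h" "h < d" and r: "r \<in> {s..t}"
      have "\<bar>f4 h r - inner (blinfun_apply g (u' r)) (u' r)\<bar> = \<bar>inner (blinfun_apply g (u' r)) (wh h r - u' r)\<bar>"
        unfolding f4_def by (simp add: inner_diff_right)
      also have "\<dots> \<le> norm (blinfun_apply g (u' r)) * norm (wh h r - u' r)" by (rule Cauchy_Schwarz_ineq2)
      also have "\<dots> \<le> (norm g * \<bar>B3\<bar>) * (e / K)"
      proof (intro mult_mono)
        show "norm (blinfun_apply g (u' r)) \<le> norm g * \<bar>B3\<bar>"
        proof -
          have "norm (blinfun_apply g (u' r)) \<le> norm g * norm (u' r)" by (rule norm_blinfun)
          also have "\<dots> \<le> norm g * \<bar>B3\<bar>" using B3 r by (intro mult_left_mono) force+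
          finally show ?thesis .
        qed
        show "norm (wh h r - u' r) \<le> e / K" using d h r by auto
      qed auto
      also have "\<dots> \<le> e" using e K unfolding K_def by (simp add: field_simps)
      finally show "\<bar>f4 h r - inner (blinfun_apply g (u' r)) (u' r)\<bar> \<le> e" .
    qed
  qed
  have lim6: "(Y \<longlongrightarrow> integral {s..t} (\<lambda>r. a * norm (u r) * norm (u' r))) (at_right 0)"
    unfolding Y_def
  proof (rule unif_int_limit[OF st(2) _ st(1)])
    show "(\<lambda>r. a * norm (u r) * norm (wh h r)) integrable_on {s..t}" if "0 < h" "h < s" for h
      using that by (intro integrable_continuous_real continuous_intros uc whc) auto
    show "(\<lambda>r. a * norm (u r) * norm (u' r)) integrable_on {s..t}"
      by (intro integrable_continuous_real continuous_intros u'c uc)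
    fix e :: real assume e: "e > 0"
    define K where "K = a * \<bar>B1\<bar> + 1"
    have K: "K > 0" unfolding K_def using a_nn by (simp add: add_nonneg_pos)
    obtain d where d: "d > 0" "\<forall>h. 0 < h \<longrightarrow> h < d \<longrightarrow> (\<forall>r\<in>{s..t}. norm (wh h r - u' r) \<le> e / K)"
      using wh_unif[OF st, of "e / K"] e K by auto
    show "\<exists>d>0. \<forall>h. 0 < h \<longrightarrow> h < d \<longrightarrow> (\<forall>r\<in>{s..t}. \<bar>a * norm (u r) * norm (wh h r) - a * norm (u r) * norm (u' r)\<bar> \<le> e)"
    proof (intro exI[of _ d] conjI allI impI ballI d(1))
      fix h r assume h: "0 < h" "h < d" and r: "r \<in> {s..t}"
      have "\<bar>a * norm (u r) * norm (wh h r) - a * norm (u r) * norm (u' r)\<bar> = (a * norm (u r)) * \<bar>norm (wh h r) - norm (u' r)\<bar>"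
        using a_nn by (simp add: abs_mult right_diff_distrib[symmetric])
      also have "\<dots> \<le> (a * \<bar>B1\<bar>) * (e / K)"
      proof (rule mult_mono)
        show "a * norm (u r) \<le> a * \<bar>B1\<bar>" using B1 r a_nn by (intro mult_left_mono) force+
        show "\<bar>norm (wh h r) - norm (u' r)\<bar> \<le> e / K" using d h r norm_triangle_ineq3[of "wh h r" "u' r"] by fastforce
      qed (use a_nn in auto)
      also have "\<dots> \<le> e" using e K a_nn unfolding K_def by (simp add: field_simps)
      finally show "\<bar>a * norm (u r) * norm (wh h r) - a * norm (u r) * norm (u' r)\<bar> \<le> e" .
    qed
  qed
  define X0 where "X0 = inner (u' t) (u' t) - inner (u' s) (u' s)
     + (((norm (S (u t)))\<^sup>2 - (norm (S (u s)))\<^sup>2) / 2 + integral {s..t} (\<lambda>r. inner (blinfun_apply g (u' r)) (u' r))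
        - ((norm (u' t))\<^sup>2 - (norm (u' s))\<^sup>2) / 2)"
  have limX: "(X \<longlongrightarrow> X0) (at_right 0)"
  proof (rule Lim_transform_eventually)
    show "((\<lambda>h. inner (u' t) (wh h t) - inner (u' s) (wh h s) + (integral {s..t} (f3 h) + integral {s..t} (f4 h) - integral {s..t} (f5 h))) \<longlongrightarrow> X0) (at_right 0)"
      unfolding X0_def using st by (intro tendsto_intros lim1 lim3 lim4 lim5) auto
    show "\<forall>\<^sub>F h in at_right 0. inner (u' t) (wh h t) - inner (u' s) (wh h s) + (integral {s..t} (f3 h) + integral {s..t} (f4 h) - integral {s..t} (f5 h)) = X h"
      using ev
    proof (rule eventually_mono)
      fix h assume h: "0 < h \<and> h \<le> s"
      have i3: "f3 h integrable_on {s..t}" unfolding f3_def using h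
        by (intro integrable_continuous_real continuous_intros Suc Swhc) auto
      have i4: "f4 h integrable_on {s..t}" unfolding f4_def using h
        by (intro integrable_continuous_real continuous_intros u'c whc) auto
      have i5: "f5 h integrable_on {s..t}" unfolding f5_def using h
        by (intro integrable_continuous_real continuous_intros u'c wh'c) auto
      have "integral {s..t} (\<lambda>r. f3 h r + f4 h r - f5 h r) = integral {s..t} (f3 h) + integral {s..t} (f4 h) - integral {s..t} (f5 h)"
        using i3 i4 i5 by (simp add: integral_add integral_diff integrable_add)
      then show "inner (u' t) (wh h t) - inner (u' s) (wh h s) + (integral {s..t} (f3 h) + integral {s..t} (f4 h) - integral {s..t} (f5 h)) = X h"
        unfolding X_def by simp
    qed
  qed
  have "\<bar>X0\<bar> \<le> integral {s..t} (\<lambda>r. a * norm (u r) * norm (u' r))"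
  proof (rule tendsto_le[OF trivial_limit_at_right_real lim6 tendsto_rabs[OF limX]])
    show "\<forall>\<^sub>F h in at_right 0. \<bar>X h\<bar> \<le> Y h" using ev by (rule eventually_mono) (use PRh in auto)
  qed
  moreover have "X0 = ((norm (S (u t)))\<^sup>2 + (norm (u' t))\<^sup>2 - ((norm (S (u s)))\<^sup>2 + (norm (u' s))\<^sup>2)) / 2
            + integral {s..t} (\<lambda>r. inner (blinfun_apply g (u' r)) (u' r))"
    unfolding X0_def by (simp add: power2_norm_eq_inner[symmetric] field_simps)
  ultimately show ?thesis by simp
qed

end

lemma quad_aux:
  fixes P c a :: real
  assumes P: "P > 0" and c: "c > 0" and a: "a \<ge> 0" and sm: "a\<^sup>2 < c * P"
  defines "\<kappa> \<equiv> min (min P c / 2) ((c * P - a\<^sup>2) / (c + P))"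
  shows "\<kappa> > 0" "2 * a * x * y \<le> (P - \<kappa>) * x\<^sup>2 + (c - \<kappa>) * y\<^sup>2"
proof -
  show kp: "\<kappa> > 0" unfolding \<kappa>_def using P c sm by auto
  have k0: "\<kappa> \<le> min P c / 2" unfolding \<kappa>_def by (rule min.cobounded1)
  have k1: "\<kappa> \<le> P / 2" "\<kappa> \<le> c / 2" using k0 by auto
  have k2: "\<kappa> * (c + P) \<le> c * P - a\<^sup>2"
  proof -
    have "\<kappa> \<le> (c * P - a\<^sup>2) / (c + P)" unfolding \<kappa>_def by simp
    then show ?thesis using P c by (simp add: pos_le_divide_eq)
  qed
  have Pk: "P - \<kappa> > 0" using k1 P by linarith
  have ck: "(P - \<kappa>) * (c - \<kappa>) \<ge> a\<^sup>2"
  proof -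
    have "(P - \<kappa>) * (c - \<kappa>) = c * P - \<kappa> * (c + P) + \<kappa>\<^sup>2" by (simp add: algebra_simps power2_eq_square)
    then show ?thesis using k2 by (smt (verit) zero_le_power2)
  qed
  have "(P - \<kappa>) * ((P - \<kappa>) * x\<^sup>2 - 2 * a * x * y + (c - \<kappa>) * y\<^sup>2)
        = ((P - \<kappa>) * x - a * y)\<^sup>2 + ((P - \<kappa>) * (c - \<kappa>) - a\<^sup>2) * y\<^sup>2"
    by (simp add: algebra_simps power2_eq_square)
  also have "\<dots> \<ge> 0" using ck by (intro add_nonneg_nonneg) auto
  finally have "(P - \<kappa>) * ((P - \<kappa>) * x\<^sup>2 - 2 * a * x * y + (c - \<kappa>) * y\<^sup>2) \<ge> 0" .
  then have "(P - \<kappa>) * x\<^sup>2 - 2 * a * x * y + (c - \<kappa>) * y\<^sup>2 \<ge> 0" using Pk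
    by (simp add: zero_le_mult_iff)
  then show "2 * a * x * y \<le> (P - \<kappa>) * x\<^sup>2 + (c - \<kappa>) * y\<^sup>2" by simp
qed

locale wsol2 = wsol +
  fixes K c \<rho> \<eta> :: real
  assumes gV: "\<And>v. v \<in> DS \<Longrightarrow> blinfun_apply g v \<in> DS"
    and gK: "\<And>v. v \<in> DS \<Longrightarrow> norm (S (blinfun_apply g v)) \<le> K * norm (S v)"
    and gco: "\<And>v. inner (blinfun_apply g v) v \<ge> c * (norm v)\<^sup>2"
    and key: "\<And>v. v \<in> DS \<Longrightarrow> inner (S v) (S (blinfun_apply g v)) \<ge> \<rho> * (norm v)\<^sup>2 + \<eta> * (norm (S v))\<^sup>2"
    and c_pos: "c > 0" and rho_pos: "\<rho> > 0" and eta_pos: "\<eta> > 0"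
    and small: "a\<^sup>2 + c * a * norm g < c * \<rho>"
begin

lemma Sgu_cont: "continuous_on {0..} (\<lambda>r. S (blinfun_apply g (u r)))"
  unfolding continuous_on_iff
proof (intro ballI allI impI)
  fix x e :: real assume x: "x \<in> {0..}" and e: "e > 0"
  have e': "e / (\<bar>K\<bar> + 1) > 0" using e by (simp add: add_nonneg_pos)
  obtain d where d: "d > 0" "\<forall>x'\<in>{0..}. dist x' x < d \<longrightarrow> dist (S (u x')) (S (u x)) < e / (\<bar>K\<bar> + 1)"
    using Su_cont x e' unfolding continuous_on_iff by blast
  show "\<exists>d>0. \<forall>x'\<in>{0..}. dist x' x < d \<longrightarrow> dist (S (blinfun_apply g (u x'))) (S (blinfun_apply g (u x))) < e"
  proof (intro exI[of _ d] conjI ballI impI d(1))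
    fix x' :: real assume x': "x' \<in> {0..}" and dx: "dist x' x < d"
    have DS1: "u x' \<in> DS" "u x \<in> DS" using x x' uDS by auto
    have DS2: "u x' - u x \<in> DS" using DS1 sub by (simp add: subspace_diff)
    have "S (blinfun_apply g (u x')) - S (blinfun_apply g (u x)) = S (blinfun_apply g (u x' - u x))"
      using DS1 gV by (simp add: S_diff blinfun.diff_right)
    then have "dist (S (blinfun_apply g (u x'))) (S (blinfun_apply g (u x))) = norm (S (blinfun_apply g (u x' - u x)))"
      by (simp add: dist_norm)
    also have "\<dots> \<le> K * norm (S (u x' - u x))" using gK[OF DS2] .
    also have "\<dots> \<le> \<bar>K\<bar> * dist (S (u x')) (S (u x))" using DS1 by (simp add: S_diff dist_norm mult_right_mono)
    also have "\<dots> \<le> \<bar>K\<bar> * (e / (\<bar>K\<bar> + 1))" using d(2) x' dx by (intro mult_left_mono) auto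
    also have "\<dots> < e"
    proof -
      have "\<bar>K\<bar> / (\<bar>K\<bar> + 1) < 1" by (simp add: add_nonneg_pos)
      then have "e * (\<bar>K\<bar> / (\<bar>K\<bar> + 1)) < e * 1" using e by (intro mult_strict_left_mono) auto
      then show ?thesis by (simp add: mult.commute)
    qed
    finally show "dist (S (blinfun_apply g (u x'))) (S (blinfun_apply g (u x))) < e" .
  qed
qed

lemma psi:
  assumes st: "0 \<le> s" "s \<le> t"
  shows "\<bar>inner (u' t) (blinfun_apply g (u t)) - inner (u' s) (blinfun_apply g (u s))
     + integral {s..t} (\<lambda>r. inner (S (u r)) (S (blinfun_apply g (u r))) + inner (blinfun_apply g (u' r)) (blinfun_apply g (u r))
          - inner (u' r) (blinfun_apply g (u' r)))\<bar>
     \<le> integral {s..t} (\<lambda>r. a * norm (u r) * norm (blinfun_apply g (u r)))"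
proof (rule PR[OF st])
  show "\<And>r. r \<in> {s..t} \<Longrightarrow> blinfun_apply g (u r) \<in> DS" using st by (auto intro!: gV uDS)
  show "continuous_on {s..t} (\<lambda>r. S (blinfun_apply g (u r)))" using cont_sub[OF st(1) Sgu_cont] .
  show "((\<lambda>r. blinfun_apply g (u r)) has_vector_derivative blinfun_apply g (u' r)) (at r within {s..t})"
    if r: "r \<in> {s..t}" for r
  proof -
    have "(u has_vector_derivative u' r) (at r within {s..t})"
      using r st by (intro has_vector_derivative_within_subset[OF u_der]) auto
    then show ?thesis by (rule bounded_linear.has_vector_derivative[OF blinfun.bounded_linear_right])
  qed
  show "continuous_on {s..t} (\<lambda>r. blinfun_apply g (u' r))"
    by (intro continuous_intros cont_sub[OF st(1) u'_cont])
qed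

lemma gsq:
  assumes st: "0 \<le> s" "s \<le> t"
  shows "(norm (blinfun_apply g (u t)))\<^sup>2 - (norm (blinfun_apply g (u s)))\<^sup>2
        = 2 * integral {s..t} (\<lambda>r. inner (blinfun_apply g (u' r)) (blinfun_apply g (u r)))"
proof -
  have "((\<lambda>r. 2 * inner (blinfun_apply g (u' r)) (blinfun_apply g (u r))) has_integral
      (inner (blinfun_apply g (u t)) (blinfun_apply g (u t)) - inner (blinfun_apply g (u s)) (blinfun_apply g (u s)))) {s..t}"
  proof (rule fundamental_theorem_of_calculus[OF st(2)])
    fix r assume r: "r \<in> {s..t}"
    have "(u has_vector_derivative u' r) (at r within {s..t})"
      using r st by (intro has_vector_derivative_within_subset[OF u_der]) auto
    then have d: "((\<lambda>r. blinfun_apply g (u r)) has_vector_derivative blinfun_apply g (u' r)) (at r within {s..t})"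
      by (rule bounded_linear.has_vector_derivative[OF blinfun.bounded_linear_right])
    show "((\<lambda>r. inner (blinfun_apply g (u r)) (blinfun_apply g (u r))) has_vector_derivative
        2 * inner (blinfun_apply g (u' r)) (blinfun_apply g (u r))) (at r within {s..t})"
      using bounded_bilinear.has_vector_derivative[OF bounded_bilinear_inner d d]
      by (simp add: inner_commute)
  qed
  then have "integral {s..t} (\<lambda>r. 2 * inner (blinfun_apply g (u' r)) (blinfun_apply g (u r)))
      = inner (blinfun_apply g (u t)) (blinfun_apply g (u t)) - inner (blinfun_apply g (u s)) (blinfun_apply g (u s))"
    by (rule integral_unique)
  then show ?thesis by (simp add: power2_norm_eq_inner)
qed

definition Lf where "Lf r = (norm (S (u r)))\<^sup>2 + (norm (u' r))\<^sup>2 + inner (u' r) (blinfun_apply g (u r)) + (norm (blinfun_apply g (u r)))\<^sup>2 / 2"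
definition P0 where "P0 = \<rho> - a * norm g"
definition \<kappa>0 where "\<kappa>0 = min (min P0 c / 2) ((c * P0 - a\<^sup>2) / (c + P0))"
definition \<delta>0 where "\<delta>0 = min \<kappa>0 \<eta> / (1 + norm g + (norm g)\<^sup>2)"

lemma P0_pos: "P0 > 0" and a2: "a\<^sup>2 < c * P0"
proof -
  have e1: "c * (a * norm g) = c * a * norm g" by simp
  have "c * (a * norm g) < c * \<rho>" using small zero_le_power2[of a] e1 by linarith
  then have "a * norm g < \<rho>" using c_pos by simp
  then show "P0 > 0" unfolding P0_def by simp
  show "a\<^sup>2 < c * P0" unfolding P0_def using small by (simp add: algebra_simps)
qed

lemma kappa0: "\<kappa>0 > 0" "2 * a * x * y \<le> (P0 - \<kappa>0) * x\<^sup>2 + (c - \<kappa>0) * y\<^sup>2"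
  unfolding \<kappa>0_def using quad_aux[OF P0_pos c_pos a_nn a2] by auto

lemma delta0_pos: "\<delta>0 > 0"
  unfolding \<delta>0_def using kappa0(1) eta_pos by (intro divide_pos_pos) (auto simp: add_pos_nonneg)

lemma Lf_nonneg: "Lf r \<ge> 0"
proof -
  have "Lf r = (norm (S (u r)))\<^sup>2 + (norm (u' r + (1/2) *\<^sub>R blinfun_apply g (u r)))\<^sup>2 + (norm (blinfun_apply g (u r)))\<^sup>2 / 4"
    unfolding Lf_def by (simp add: power_divide power2_norm_eq_inner inner_add_left inner_add_right inner_commute algebra_simps)
  then show ?thesis by simp
qed

lemma E_le_Lf: "(norm (S (u r)))\<^sup>2 + (norm (u' r))\<^sup>2 \<le> 2 * Lf r"
proof -
  define p where "p = u' r + (1/2) *\<^sub>R blinfun_apply g (u r)"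
  define q where "q = (1/2) *\<^sub>R blinfun_apply g (u r)"
  have L: "Lf r = (norm (S (u r)))\<^sup>2 + (norm p)\<^sup>2 + (norm q)\<^sup>2"
    unfolding Lf_def p_def q_def by (simp add: power_divide power2_norm_eq_inner inner_add_left inner_add_right inner_commute algebra_simps)
  have "u' r = p - q" unfolding p_def q_def by simp
  then have "(norm (u' r))\<^sup>2 \<le> 2 * (norm p)\<^sup>2 + 2 * (norm q)\<^sup>2"
  proof -
    have "(norm (p - q))\<^sup>2 + (norm (p + q))\<^sup>2 = 2 * (norm p)\<^sup>2 + 2 * (norm q)\<^sup>2"
      by (simp add: power2_norm_eq_inner inner_add_left inner_add_right inner_diff_left inner_diff_right inner_commute)
    moreover have "0 \<le> (norm (p + q))\<^sup>2" by simp
    ultimately show ?thesis unfolding \<open>u' r = p - q\<close> by linarith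
  qed
  moreover have "0 \<le> (norm (S (u r)))\<^sup>2" by simp
  ultimately show ?thesis using L by linarith
qed

lemma Lf_upper: "Lf r \<le> (1 + norm g + (norm g)\<^sup>2) * ((norm (u r))\<^sup>2 + (norm (u' r))\<^sup>2 + (norm (S (u r)))\<^sup>2)"
proof -
  define x where "x = norm (u r)"
  define y where "y = norm (u' r)"
  define z where "z = norm (S (u r))"
  define G where "G = norm g"
  have x0: "x \<ge> 0" "y \<ge> 0" "G \<ge> 0" unfolding x_def y_def G_def by auto
  have ng: "norm (blinfun_apply g (u r)) \<le> G * x" unfolding G_def x_def by (rule norm_blinfun)
  have i1: "inner (u' r) (blinfun_apply g (u r)) \<le> y * (G * x)"
  proof -
    have "inner (u' r) (blinfun_apply g (u r)) \<le> y * norm (blinfun_apply g (u r))"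
      unfolding y_def by (rule norm_cauchy_schwarz)
    also have "\<dots> \<le> y * (G * x)" using ng x0 by (intro mult_left_mono) auto
    finally show ?thesis .
  qed
  have i2: "(norm (blinfun_apply g (u r)))\<^sup>2 \<le> (G * x)\<^sup>2" using ng by (intro power_mono) auto
  have i3: "2 * (x * y) \<le> x\<^sup>2 + y\<^sup>2" using sum_squares_bound[of x y] by (simp add: power2_eq_square algebra_simps)
  have "Lf r \<le> z\<^sup>2 + y\<^sup>2 + G * (x * y) + G\<^sup>2 * x\<^sup>2 / 2"
    using i1 i2 unfolding Lf_def x_def[symmetric] y_def[symmetric] z_def[symmetric]
    by (simp add: power_mult_distrib algebra_simps)
  also have "\<dots> \<le> z\<^sup>2 + y\<^sup>2 + G * (x\<^sup>2 + y\<^sup>2) + G\<^sup>2 * x\<^sup>2"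
  proof -
    have "G * (2 * (x * y)) \<le> G * (x\<^sup>2 + y\<^sup>2)" using i3 x0 by (intro mult_left_mono) auto
    moreover have "G * (x\<^sup>2 + y\<^sup>2) \<ge> 0" "G\<^sup>2 * x\<^sup>2 \<ge> 0" using x0 by auto
    moreover have "G * (2 * (x * y)) = 2 * (G * (x * y))" by simp
    ultimately show ?thesis by linarith
  qed
  also have "\<dots> \<le> (1 + G + G\<^sup>2) * (x\<^sup>2 + y\<^sup>2 + z\<^sup>2)"
    using x0 by (simp add: algebra_simps)
  finally show ?thesis unfolding x_def y_def z_def G_def .
qed

lemma pointwise:
  assumes r: "r \<ge> 0"
  shows "2 * a * norm (u r) * norm (u' r) + a * norm (u r) * norm (blinfun_apply g (u r))
      - inner (blinfun_apply g (u' r)) (u' r) - inner (S (u r)) (S (blinfun_apply g (u r))) \<le> - \<delta>0 * Lf r"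
proof -
  define x where "x = norm (u r)"
  define y where "y = norm (u' r)"
  define z where "z = norm (S (u r))"
  define G where "G = norm g"
  define \<mu> where "\<mu> = min \<kappa>0 \<eta>"
  define C1 where "C1 = 1 + G + G\<^sup>2"
  have x0: "x \<ge> 0" "y \<ge> 0" "G \<ge> 0" unfolding x_def y_def G_def by auto
  have C1: "C1 > 0" unfolding C1_def using x0 by (simp add: add_pos_nonneg)
  have mu: "\<mu> > 0" "\<mu> \<le> \<kappa>0" "\<mu> \<le> \<eta>" unfolding \<mu>_def using kappa0(1) eta_pos by auto
  have h1: "a * x * norm (blinfun_apply g (u r)) \<le> a * G * x\<^sup>2"
  proof -
    have "a * x * norm (blinfun_apply g (u r)) \<le> a * x * (G * x)"
      using a_nn x0 unfolding G_def x_def by (intro mult_left_mono norm_blinfun) auto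
    then show ?thesis by (simp add: power2_eq_square algebra_simps)
  qed
  have h2: "c * y\<^sup>2 \<le> inner (blinfun_apply g (u' r)) (u' r)" unfolding y_def by (rule gco)
  have h3: "\<rho> * x\<^sup>2 + \<eta> * z\<^sup>2 \<le> inner (S (u r)) (S (blinfun_apply g (u r)))"
    unfolding x_def z_def using key[OF uDS[OF r]] .
  have q: "2 * a * x * y \<le> (P0 - \<kappa>0) * x\<^sup>2 + (c - \<kappa>0) * y\<^sup>2" by (rule kappa0(2))
  have PG: "P0 + a * G = \<rho>" unfolding P0_def G_def by simp
  have "2 * a * x * y + a * x * norm (blinfun_apply g (u r))
      - inner (blinfun_apply g (u' r)) (u' r) - inner (S (u r)) (S (blinfun_apply g (u r)))
      \<le> - \<kappa>0 * x\<^sup>2 - \<kappa>0 * y\<^sup>2 - \<eta> * z\<^sup>2"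
  proof -
    have "(P0 - \<kappa>0) * x\<^sup>2 + a * G * x\<^sup>2 - \<rho> * x\<^sup>2 = (P0 + a * G - \<rho>) * x\<^sup>2 - \<kappa>0 * x\<^sup>2"
      by (simp add: algebra_simps)
    then have "(P0 - \<kappa>0) * x\<^sup>2 + a * G * x\<^sup>2 - \<rho> * x\<^sup>2 = - \<kappa>0 * x\<^sup>2" using PG by simp
    moreover have "(c - \<kappa>0) * y\<^sup>2 - c * y\<^sup>2 = - \<kappa>0 * y\<^sup>2" by (simp add: algebra_simps)
    ultimately show ?thesis using h1 h2 h3 q by linarith
  qed
  also have "\<dots> \<le> - \<mu> * (x\<^sup>2 + y\<^sup>2 + z\<^sup>2)"
  proof -
    have "\<mu> * x\<^sup>2 \<le> \<kappa>0 * x\<^sup>2" "\<mu> * y\<^sup>2 \<le> \<kappa>0 * y\<^sup>2" "\<mu> * z\<^sup>2 \<le> \<eta> * z\<^sup>2"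
      using mu by (auto intro!: mult_right_mono)
    then show ?thesis by (simp add: algebra_simps)
  qed
  also have "\<dots> \<le> - (\<mu> / C1) * Lf r"
  proof -
    have "Lf r \<le> C1 * (x\<^sup>2 + y\<^sup>2 + z\<^sup>2)" using Lf_upper unfolding C1_def G_def x_def y_def z_def by simp
    then have "(\<mu> / C1) * Lf r \<le> (\<mu> / C1) * (C1 * (x\<^sup>2 + y\<^sup>2 + z\<^sup>2))"
      using mu C1 by (intro mult_left_mono) auto
    also have "\<dots> = \<mu> * (x\<^sup>2 + y\<^sup>2 + z\<^sup>2)" using C1 by simp
    finally show ?thesis by simp
  qed
  also have "\<mu> / C1 = \<delta>0" unfolding \<delta>0_def \<mu>_def C1_def G_def ..
  finally show ?thesis unfolding x_def y_def .
qed

lemma Lf_cont: "continuous_on {0..} Lf"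
  unfolding Lf_def by (intro continuous_intros Su_cont u'_cont u_cont) auto

lemma lyap:
  assumes st: "0 < s" "s \<le> t"
  shows "Lf t - Lf s \<le> - \<delta>0 * integral {s..t} Lf"
proof -
  have s0: "0 \<le> s" using st by simp
  have uc: "continuous_on {s..t} u" using cont_sub[OF s0 u_cont] .
  have Suc: "continuous_on {s..t} (\<lambda>r. S (u r))" using cont_sub[OF s0 Su_cont] .
  have u'c: "continuous_on {s..t} u'" using cont_sub[OF s0 u'_cont] .
  have Sguc: "continuous_on {s..t} (\<lambda>r. S (blinfun_apply g (u r)))" using cont_sub[OF s0 Sgu_cont] .
  define I1 where "I1 = integral {s..t} (\<lambda>r. inner (blinfun_apply g (u' r)) (u' r))"
  define J1 where "J1 = integral {s..t} (\<lambda>r. a * norm (u r) * norm (u' r))"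
  define I4 where "I4 = integral {s..t} (\<lambda>r. inner (S (u r)) (S (blinfun_apply g (u r))))"
  define I3 where "I3 = integral {s..t} (\<lambda>r. inner (blinfun_apply g (u' r)) (blinfun_apply g (u r)))"
  define J2 where "J2 = integral {s..t} (\<lambda>r. a * norm (u r) * norm (blinfun_apply g (u r)))"
  have i1: "(\<lambda>r. inner (blinfun_apply g (u' r)) (u' r)) integrable_on {s..t}"
    by (intro integrable_continuous_real continuous_intros u'c)
  have i1': "(\<lambda>r. inner (u' r) (blinfun_apply g (u' r))) integrable_on {s..t}"
    by (intro integrable_continuous_real continuous_intros u'c)
  have j1: "(\<lambda>r. a * norm (u r) * norm (u' r)) integrable_on {s..t}"
    by (intro integrable_continuous_real continuous_intros u'c uc)
  have i4: "(\<lambda>r. inner (S (u r)) (S (blinfun_apply g (u r)))) integrable_on {s..t}"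
    by (intro integrable_continuous_real continuous_intros Suc Sguc)
  have i3: "(\<lambda>r. inner (blinfun_apply g (u' r)) (blinfun_apply g (u r))) integrable_on {s..t}"
    by (intro integrable_continuous_real continuous_intros u'c uc)
  have j2: "(\<lambda>r. a * norm (u r) * norm (blinfun_apply g (u r))) integrable_on {s..t}"
    by (intro integrable_continuous_real continuous_intros uc)
  have iL: "Lf integrable_on {s..t}" using cont_sub[OF s0 Lf_cont] integrable_continuous_real by blast
  have En: "\<bar>((norm (S (u t)))\<^sup>2 + (norm (u' t))\<^sup>2 - ((norm (S (u s)))\<^sup>2 + (norm (u' s))\<^sup>2)) / 2 + I1\<bar> \<le> J1"
    unfolding I1_def J1_def by (rule energy[OF st])
  have F2: "integral {s..t} (\<lambda>r. inner (S (u r)) (S (blinfun_apply g (u r))) + inner (blinfun_apply g (u' r)) (blinfun_apply g (u r))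
          - inner (u' r) (blinfun_apply g (u' r))) = I4 + I3 - I1"
  proof -
    have "integral {s..t} (\<lambda>r. inner (u' r) (blinfun_apply g (u' r))) = I1"
      unfolding I1_def by (simp add: inner_commute)
    then show ?thesis unfolding I4_def I3_def
      by (simp add: integral_add integral_diff i4 i3 i1' integrable_add)
  qed
  have Ps: "\<bar>inner (u' t) (blinfun_apply g (u t)) - inner (u' s) (blinfun_apply g (u s)) + (I4 + I3 - I1)\<bar> \<le> J2"
    using psi[OF s0 st(2)] unfolding F2 J2_def .
  have Gs: "(norm (blinfun_apply g (u t)))\<^sup>2 - (norm (blinfun_apply g (u s)))\<^sup>2 = 2 * I3"
    unfolding I3_def by (rule gsq[OF s0 st(2)])
  have "Lf t - Lf s \<le> 2 * J1 + J2 - I1 - I4"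
    using abs_le_D1[OF En] abs_le_D1[OF Ps] Gs unfolding Lf_def by argo
  also have "2 * J1 + J2 - I1 - I4 = integral {s..t} (\<lambda>r. 2 * a * norm (u r) * norm (u' r) + a * norm (u r) * norm (blinfun_apply g (u r))
      - inner (blinfun_apply g (u' r)) (u' r) - inner (S (u r)) (S (blinfun_apply g (u r))))"
  proof -
    have "(\<lambda>r. 2 * a * norm (u r) * norm (u' r)) = (\<lambda>r. 2 * (a * norm (u r) * norm (u' r)))" by (simp add: algebra_simps)
    then have "integral {s..t} (\<lambda>r. 2 * a * norm (u r) * norm (u' r)) = 2 * J1" unfolding J1_def by simp
    moreover have "(\<lambda>r. 2 * a * norm (u r) * norm (u' r)) integrable_on {s..t}"
      by (intro integrable_continuous_real continuous_intros u'c uc)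
    ultimately show ?thesis unfolding J2_def I1_def I4_def
      by (simp add: integral_add integral_diff i4 i1 j2 integrable_add integrable_diff)
  qed
  also have "\<dots> \<le> integral {s..t} (\<lambda>r. - \<delta>0 * Lf r)"
  proof (rule integral_le)
    show "(\<lambda>r. 2 * a * norm (u r) * norm (u' r) + a * norm (u r) * norm (blinfun_apply g (u r))
      - inner (blinfun_apply g (u' r)) (u' r) - inner (S (u r)) (S (blinfun_apply g (u r)))) integrable_on {s..t}"
      by (intro integrable_continuous_real continuous_intros u'c uc Suc Sguc)
    show "(\<lambda>r. - \<delta>0 * Lf r) integrable_on {s..t}" using integrable_on_cmult_left[OF iL, of "- \<delta>0"] by simp
    show "\<And>r. r \<in> {s..t} \<Longrightarrow> 2 * a * norm (u r) * norm (u' r) + a * norm (u r) * norm (blinfun_apply g (u r))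
      - inner (blinfun_apply g (u' r)) (u' r) - inner (S (u r)) (S (blinfun_apply g (u r))) \<le> - \<delta>0 * Lf r"
      using st by (intro pointwise) auto
  qed
  also have "\<dots> = - \<delta>0 * integral {s..t} Lf" by simp
  finally show ?thesis .
qed

end

lemma exp_diff_le:
  fixes x y \<delta> :: real
  assumes "x \<le> y" "\<delta> > 0"
  shows "exp (\<delta> * y) - exp (\<delta> * x) \<le> \<delta> * (y - x) * exp (\<delta> * y)"
proof -
  have "1 + (- \<delta> * (y - x)) \<le> exp (- \<delta> * (y - x))" using exp_ge_add_one_self[of "- \<delta> * (y - x)"] by simp
  then have "exp (\<delta> * y) * (1 - \<delta> * (y - x)) \<le> exp (\<delta> * y) * exp (- \<delta> * (y - x))"
    by (intro mult_left_mono) auto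
  also have "exp (\<delta> * y) * exp (- \<delta> * (y - x)) = exp (\<delta> * x)"
    by (simp add: exp_add[symmetric] algebra_simps)
  finally show ?thesis by (simp add: algebra_simps)
qed

lemma gronwall_dec:
  fixes L :: "real \<Rightarrow> real"
  assumes st: "s \<le> t" and Lc: "continuous_on {s..t} L" and Lnn: "\<And>r. r \<in> {s..t} \<Longrightarrow> L r \<ge> 0"
    and dpos: "\<delta> > 0"
    and H: "\<And>x y. s \<le> x \<Longrightarrow> x \<le> y \<Longrightarrow> y \<le> t \<Longrightarrow> L y - L x \<le> - \<delta> * integral {x..y} L"
  shows "L t \<le> L s * exp (- \<delta> * (t - s))"
proof -
  define F where "F \<tau> = exp (\<delta> * \<tau>) * L \<tau>" for \<tau>
  have "F t - F s \<le> (\<lambda>_. 0::real) t - (\<lambda>_. 0::real) s"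
  proof (rule local_to_global[OF st])
    fix e :: real assume e: "e > 0"
    define \<omega> where "\<omega> = e / (\<delta> * exp (\<delta> * t) + 1)"
    have \<omega>: "\<omega> > 0" unfolding \<omega>_def using e dpos by (simp add: add_pos_nonneg)
    obtain d where d: "d > 0" "\<forall>x\<in>{s..t}. \<forall>y\<in>{s..t}. \<bar>y - x\<bar> < d \<longrightarrow> norm (L y - L x) < \<omega>"
      using ucont[OF Lc \<omega>] by blast
    show "\<exists>d>0. \<forall>x y. s \<le> x \<longrightarrow> x \<le> y \<longrightarrow> y \<le> t \<longrightarrow> y - x < d \<longrightarrow> F y - F x \<le> 0 - 0 + e * (y - x)"
    proof (intro exI[of _ d] conjI allI impI d(1))
      fix x y assume xy: "s \<le> x" "x \<le> y" "y \<le> t" "y - x < d"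
      have Li: "L integrable_on {x..y}"
        using continuous_on_subset[OF Lc, of "{x..y}"] xy integrable_continuous_real by auto
      have low: "(y - x) * (L x - \<omega>) \<le> integral {x..y} L"
      proof -
        have "integral {x..y} (\<lambda>r. L x - \<omega>) \<le> integral {x..y} L"
        proof (rule integral_le[OF _ Li])
          show "(\<lambda>r. L x - \<omega>) integrable_on {x..y}" by (rule integrable_const_ivl)
          fix r assume r: "r \<in> {x..y}"
          have "norm (L r - L x) < \<omega>" using d(2) r xy by auto
          then show "L x - \<omega> \<le> L r" by auto
        qed
        then show ?thesis using xy by simp
      qed
      have Lx: "L x \<ge> 0" using Lnn xy by auto
      have ey: "exp (\<delta> * y) \<le> exp (\<delta> * t)" using xy dpos by simp
      have "F y - F x = exp (\<delta> * y) * (L y - L x) + (exp (\<delta> * y) - exp (\<delta> * x)) * L x"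
        unfolding F_def by (simp add: algebra_simps)
      also have "\<dots> \<le> exp (\<delta> * y) * (- \<delta> * ((y - x) * (L x - \<omega>))) + (\<delta> * (y - x) * exp (\<delta> * y)) * L x"
      proof (rule add_mono)
        have "L y - L x \<le> - \<delta> * integral {x..y} L" using H xy by auto
        also have "\<dots> \<le> - \<delta> * ((y - x) * (L x - \<omega>))" using low dpos by simp
        finally show "exp (\<delta> * y) * (L y - L x) \<le> exp (\<delta> * y) * (- \<delta> * ((y - x) * (L x - \<omega>)))"
          by (intro mult_left_mono) auto
        show "(exp (\<delta> * y) - exp (\<delta> * x)) * L x \<le> (\<delta> * (y - x) * exp (\<delta> * y)) * L x"
          using exp_diff_le[OF xy(2) dpos] Lx by (intro mult_right_mono) auto
      qed
      also have "\<dots> = (\<delta> * exp (\<delta> * y) * \<omega>) * (y - x)" by (simp add: algebra_simps)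
      also have "\<dots> \<le> (\<delta> * exp (\<delta> * t) * \<omega>) * (y - x)"
        using xy dpos \<omega> ey by (intro mult_right_mono) auto
      also have "\<delta> * exp (\<delta> * t) * \<omega> \<le> e"
      proof -
        have "\<delta> * exp (\<delta> * t) * \<omega> = e * ((\<delta> * exp (\<delta> * t)) / (\<delta> * exp (\<delta> * t) + 1))"
          unfolding \<omega>_def by simp
        also have "\<dots> \<le> e * 1"
        proof -
          have p: "0 < \<delta> * exp (\<delta> * t) + 1" using dpos by (simp add: add_pos_nonneg)
          have "(\<delta> * exp (\<delta> * t)) / (\<delta> * exp (\<delta> * t) + 1) \<le> 1" using p by (simp add: pos_divide_le_eq)
          then show ?thesis using e by (intro mult_left_mono) auto
        qed
        finally show ?thesis by simp
      qed
      then have "(\<delta> * exp (\<delta> * t) * \<omega>) * (y - x) \<le> e * (y - x)" using xy by (intro mult_right_mono) auto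
      finally show "F y - F x \<le> 0 - 0 + e * (y - x)" by simp
    qed
  qed
  then have "exp (\<delta> * t) * L t \<le> exp (\<delta> * s) * L s" unfolding F_def by simp
  then have "L t \<le> exp (\<delta> * s) * L s / exp (\<delta> * t)" by (simp add: field_simps)
  also have "\<dots> = L s * exp (- \<delta> * (t - s))"
  proof -
    have "exp (\<delta> * s) = exp (\<delta> * t) * exp (- \<delta> * (t - s))" by (simp add: exp_add[symmetric] algebra_simps)
    then show ?thesis by simp
  qed
  finally show ?thesis .
qed



context wsol2 begin

lemma decay:
  assumes st: "0 \<le> s" "s \<le> t"
  shows "Lf t \<le> Lf s * exp (- \<delta>0 * (t - s))"
proof -
  have pos: "Lf t \<le> Lf s' * exp (- \<delta>0 * (t - s'))" if s': "0 < s'" "s' \<le> t" for s'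
  proof (rule gronwall_dec[OF s'(2) _ _ delta0_pos])
    show "continuous_on {s'..t} Lf" using cont_sub[of s' Lf t] Lf_cont s' by simp
    show "\<And>r. r \<in> {s'..t} \<Longrightarrow> 0 \<le> Lf r" by (rule Lf_nonneg)
    show "\<And>x y. s' \<le> x \<Longrightarrow> x \<le> y \<Longrightarrow> y \<le> t \<Longrightarrow> Lf y - Lf x \<le> - \<delta>0 * integral {x..y} Lf"
      using s' by (intro lyap) auto
  qed
  show ?thesis
  proof (cases "s > 0")
    case True then show ?thesis using pos st by simp
  next
    case False
    then have s0: "s = 0" using st by simp
    show ?thesis
    proof (cases "t = 0")
      case True then show ?thesis using s0 by simp
    next
      case False
      then have t0: "t > 0" using st s0 by simp
      have c0: "continuous_on {0..} (\<lambda>s'. Lf s' * exp (- \<delta>0 * (t - s')))"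
        by (intro continuous_intros Lf_cont)
      then have "continuous (at 0 within {0..}) (\<lambda>s'. Lf s' * exp (- \<delta>0 * (t - s')))"
        by (simp add: continuous_on_eq_continuous_within)
      then have "((\<lambda>s'. Lf s' * exp (- \<delta>0 * (t - s'))) \<longlongrightarrow> Lf 0 * exp (- \<delta>0 * (t - 0))) (at 0 within {0..})"
        unfolding continuous_within by simp
      then have lim: "((\<lambda>s'. Lf s' * exp (- \<delta>0 * (t - s'))) \<longlongrightarrow> Lf 0 * exp (- \<delta>0 * (t - 0))) (at_right 0)"
        by (rule tendsto_within_subset) auto
      have ev: "\<forall>\<^sub>F s' in at_right 0. Lf t \<le> Lf s' * exp (- \<delta>0 * (t - s'))"
        using eventually_at_right_real[OF t0] by (rule eventually_mono) (use pos in auto)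
      have "Lf t \<le> Lf 0 * exp (- \<delta>0 * (t - 0))"
        by (rule tendsto_lowerbound[OF lim ev]) simp
      then show ?thesis using s0 by simp
    qed
  qed
qed

definition C0 where "C0 = max 0 K / \<rho>"

lemma u_le_Su: "r \<ge> 0 \<Longrightarrow> (norm (u r))\<^sup>2 \<le> C0 * (norm (S (u r)))\<^sup>2"
proof -
  assume r: "r \<ge> 0"
  define x where "x = norm (u r)"
  define z where "z = norm (S (u r))"
  have "\<rho> * x\<^sup>2 + \<eta> * z\<^sup>2 \<le> inner (S (u r)) (S (blinfun_apply g (u r)))"
    unfolding x_def z_def using key[OF uDS[OF r]] .
  also have "\<dots> \<le> z * norm (S (blinfun_apply g (u r)))" unfolding z_def by (rule norm_cauchy_schwarz)
  also have "\<dots> \<le> z * (K * z)" unfolding z_def using gK[OF uDS[OF r]] by (intro mult_left_mono) auto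
  also have "\<dots> \<le> max 0 K * z\<^sup>2"
  proof -
    have "K * (z * z) \<le> max 0 K * (z * z)" by (intro mult_right_mono) auto
    then show ?thesis by (simp add: power2_eq_square algebra_simps)
  qed
  finally have "\<rho> * x\<^sup>2 \<le> max 0 K * z\<^sup>2" using eta_pos by (smt (verit) mult_nonneg_nonneg zero_le_power2)
  then have "x\<^sup>2 \<le> max 0 K * z\<^sup>2 / \<rho>" using rho_pos by (simp add: pos_le_divide_eq mult.commute)
  then show ?thesis unfolding C0_def x_def z_def by (simp add: field_simps)
qed

lemma final:
  assumes st: "0 \<le> s" "s \<le> t"
  shows "(norm (S (u t)))\<^sup>2 + (norm (u' t))\<^sup>2
     \<le> (2 * (1 + norm g + (norm g)\<^sup>2) * (1 + C0)) * ((norm (S (u s)))\<^sup>2 + (norm (u' s))\<^sup>2) * exp (- \<delta>0 * (t - s))"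
proof -
  define C1 where "C1 = 1 + norm g + (norm g)\<^sup>2"
  have C1: "C1 > 0" unfolding C1_def by (simp add: add_pos_nonneg)
  have C0: "C0 \<ge> 0" unfolding C0_def using rho_pos by simp
  have "Lf s \<le> C1 * ((norm (u s))\<^sup>2 + (norm (u' s))\<^sup>2 + (norm (S (u s)))\<^sup>2)"
    unfolding C1_def by (rule Lf_upper)
  also have "\<dots> \<le> C1 * ((1 + C0) * ((norm (S (u s)))\<^sup>2 + (norm (u' s))\<^sup>2))"
  proof (rule mult_left_mono)
    have "(norm (u s))\<^sup>2 \<le> C0 * (norm (S (u s)))\<^sup>2" using u_le_Su st by simp
    moreover have "C0 * (norm (u' s))\<^sup>2 \<ge> 0" using C0 by simp
    ultimately show "(norm (u s))\<^sup>2 + (norm (u' s))\<^sup>2 + (norm (S (u s)))\<^sup>2 \<le> (1 + C0) * ((norm (S (u s)))\<^sup>2 + (norm (u' s))\<^sup>2)"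
      by (simp add: algebra_simps)
  qed (use C1 in simp)
  finally have Ls: "Lf s \<le> C1 * (1 + C0) * ((norm (S (u s)))\<^sup>2 + (norm (u' s))\<^sup>2)" by (simp add: algebra_simps)
  have "(norm (S (u t)))\<^sup>2 + (norm (u' t))\<^sup>2 \<le> 2 * Lf t" by (rule E_le_Lf)
  also have "\<dots> \<le> 2 * (Lf s * exp (- \<delta>0 * (t - s)))" using decay[OF st] by simp
  also have "\<dots> \<le> 2 * (C1 * (1 + C0) * ((norm (S (u s)))\<^sup>2 + (norm (u' s))\<^sup>2) * exp (- \<delta>0 * (t - s)))"
    using Ls by (intro mult_left_mono mult_right_mono) auto
  finally show ?thesis unfolding C1_def by (simp add: algebra_simps)
qed

end

lemma factW:
  fixes DS :: "'h::{real_inner,complete_space} set" and S :: "'h \<Rightarrow> 'h"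
    and \<gamma> :: "'h \<Rightarrow>\<^sub>L 'h" and A :: "real \<Rightarrow> ('h \<Rightarrow>\<^sub>L 'h)" and u u' :: "real \<Rightarrow> 'h"
  assumes ms: "mild_solution DS S \<gamma> A u u'"
    and AEb: "AE r in lborel. r \<ge> 0 \<longrightarrow> norm (A r) \<le> a"
    and v: "v \<in> DS" and st: "0 \<le> s" "s \<le> t" and a0: "a \<ge> 0"
  shows "\<bar>inner (u' t - u' s) v + integral {s..t} (\<lambda>r. inner (S (u r)) (S v) + inner (blinfun_apply \<gamma> (u' r)) v)\<bar>
     \<le> norm v * integral {s..t} (\<lambda>r. a * norm (u r))"
proof -
  define gv where "gv r = - (inner (S (u r)) (S v) + inner (blinfun_apply (A r) (u r)) v + inner (blinfun_apply \<gamma> (u' r)) v)" for r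
  define cv where "cv r = inner (S (u r)) (S v) + inner (blinfun_apply \<gamma> (u' r)) v" for r
  define av where "av r = inner (blinfun_apply (A r) (u r)) v" for r
  have hI: "(gv has_integral (inner (u' \<tau>) v - inner (u' 0) v)) {0..\<tau>}" if "\<tau> \<ge> 0" for \<tau>
    using ms v that unfolding mild_solution_def gv_def by auto
  have Suc: "continuous_on {0..} (\<lambda>r. S (u r))" and u'c: "continuous_on {0..} u'" and uc: "continuous_on {0..} u"
    using ms unfolding mild_solution_def by auto
  have gi: "gv integrable_on {0..t}" using has_integral_integrable[OF hI[of t]] st by simp
  have gst: "integral {s..t} gv = inner (u' t - u' s) v"
  proof -
    have "integral {0..s} gv + integral {s..t} gv = integral {0..t} gv"
      using st gi by (intro Henstock_Kurzweil_Integration.integral_combine) auto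
    moreover have "integral {0..s} gv = inner (u' s) v - inner (u' 0) v" using st by (intro integral_unique hI)
    moreover have "integral {0..t} gv = inner (u' t) v - inner (u' 0) v" using st by (intro integral_unique hI) simp
    ultimately show ?thesis by (simp add: inner_diff_left)
  qed
  have gi2: "gv integrable_on {s..t}" by (rule integrable_subinterval_real[OF gi]) (use st in auto)
  have ci: "cv integrable_on {s..t}" unfolding cv_def
    using st by (intro integrable_continuous_real continuous_intros continuous_on_subset[OF Suc] continuous_on_subset[OF u'c]) auto
  have aveq: "av = (\<lambda>r. - gv r - cv r)" unfolding av_def gv_def cv_def by (auto simp: fun_eq_iff)
  have ai: "av integrable_on {s..t}" unfolding aveq using gi2 ci by (intro integrable_diff integrable_neg)
  have aint: "integral {s..t} av = - inner (u' t - u' s) v - integral {s..t} cv"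
    unfolding aveq using gi2 ci gst by (simp add: integral_diff integral_neg integrable_neg)
  obtain N where N: "{x \<in> space lborel. \<not> (x \<ge> 0 \<longrightarrow> norm (A x) \<le> a)} \<subseteq> N" "emeasure lborel N = 0" "N \<in> sets lborel"
    using AEb by (rule AE_E)
  have negN: "negligible N"
    unfolding negligible_iff_null_sets using N by (intro null_sets_completionI) auto
  define av' where "av' r = (if r \<in> N then 0 else av r)" for r
  have av'i: "av' integrable_on {s..t}" using ai negN by (rule integrable_spike) (auto simp: av'_def)
  have av'int: "integral {s..t} av' = integral {s..t} av" using negN by (rule integral_spike) (auto simp: av'_def)
  have bnd: "norm (av' r) \<le> norm v * (a * norm (u r))" if r: "r \<in> {s..t}" for r
  proof (cases "r \<in> N")
    case True
    have "0 \<le> norm v * (a * norm (u r))" using a0 by simp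
    then show ?thesis using True by (simp add: av'_def)
  next
    case False
    have "r \<ge> 0" using r st by auto
    then have An: "norm (A r) \<le> a" using N(1) False by (smt (verit, best) UNIV_I mem_Collect_eq space_borel space_lborel subset_iff)
    have "norm (av' r) = \<bar>inner (blinfun_apply (A r) (u r)) v\<bar>" using False by (simp add: av'_def av_def)
    also have "\<dots> \<le> norm (blinfun_apply (A r) (u r)) * norm v" by (rule Cauchy_Schwarz_ineq2)
    also have "\<dots> \<le> (norm (A r) * norm (u r)) * norm v" by (intro mult_right_mono norm_blinfun) auto
    also have "\<dots> \<le> (a * norm (u r)) * norm v" using An by (intro mult_right_mono) auto
    finally show ?thesis by (simp add: algebra_simps)
  qed
  have "norm (integral {s..t} av') \<le> integral {s..t} (\<lambda>r. norm v * (a * norm (u r)))"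
  proof (rule integral_norm_bound_integral[OF av'i])
    show "(\<lambda>r. norm v * (a * norm (u r))) integrable_on {s..t}"
      using st by (intro integrable_continuous_real continuous_intros continuous_on_subset[OF uc]) auto
  qed (rule bnd)
  then have "\<bar>integral {s..t} av\<bar> \<le> integral {s..t} (\<lambda>r. norm v * (a * norm (u r)))"
    unfolding av'int by simp
  also have "\<dots> = norm v * integral {s..t} (\<lambda>r. a * norm (u r))" by simp
  finally have fin: "\<bar>integral {s..t} av\<bar> \<le> norm v * integral {s..t} (\<lambda>r. a * norm (u r))" .
  have "inner (u' t - u' s) v + integral {s..t} (\<lambda>r. inner (S (u r)) (S v) + inner (blinfun_apply \<gamma> (u' r)) v)
      = - integral {s..t} av" using aint unfolding cv_def by simp
  then show ?thesis using fin by simp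
qed

theorem theorem4p1:
  fixes DB :: "'h::{real_inner,complete_space} set" and B :: "'h \<Rightarrow> 'h"
    and DS :: "'h set" and S :: "'h \<Rightarrow> 'h"
    and \<gamma> :: "'h \<Rightarrow>\<^sub>L 'h" and A :: "real \<Rightarrow> ('h \<Rightarrow>\<^sub>L 'h)"
    and c \<rho> \<eta> :: real
  assumes B_sa: "self_adjoint_op DB B"
    and B_coercive: "\<exists>b>0. \<forall>v\<in>DB. inner (B v) v \<ge> b * (norm v)\<^sup>2"
    and S_sqrt: "is_sqrt_op DB B DS S"
    and c_pos: "c > 0"
    and gamma_coercive: "\<forall>v. inner (blinfun_apply \<gamma> v) v \<ge> c * (norm v)\<^sup>2"
    and A_meas: "A \<in> borel_measurable (restrict_space lborel {0..})"
    and A_bdd: "esssup (restrict_space lborel {0..}) (\<lambda>t. ereal (norm (A t))) < \<infinity>"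
    and gamma_V: "\<forall>v\<in>DS. blinfun_apply \<gamma> v \<in> DS"
    and gamma_V_bdd: "\<exists>K. \<forall>v\<in>DS. norm (S (blinfun_apply \<gamma> v)) \<le> K * norm (S v)"
    and rho_pos: "\<rho> > 0" and eta_pos: "\<eta> > 0"
    and key: "\<forall>v\<in>DS. inner (S v) (S (blinfun_apply \<gamma> v)) \<ge> \<rho> * (norm v)\<^sup>2 + \<eta> * (norm (S v))\<^sup>2"
    and A_small: "esssup (restrict_space lborel {0..}) (\<lambda>t. ereal (norm (A t)))
                  < ereal (sqrt (c * \<rho> + c\<^sup>2 / 4 * (norm \<gamma>)\<^sup>2) - c / 2 * norm \<gamma>)"
  shows "\<exists>\<delta>>0. \<exists>M>0. \<forall>u u'. mild_solution DS S \<gamma> A u u' \<longrightarrow>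
           (\<forall>s t. 0 \<le> s \<longrightarrow> s \<le> t \<longrightarrow>
              (norm (S (u t)))\<^sup>2 + (norm (u' t))\<^sup>2
                \<le> M * ((norm (S (u s)))\<^sup>2 + (norm (u' s))\<^sup>2) * exp (- \<delta> * (t - s)))"
proof -
  obtain K where K: "\<forall>v\<in>DS. norm (S (blinfun_apply \<gamma> v)) \<le> K * norm (S v)" using gamma_V_bdd by blast
  define G where "G = norm \<gamma>"
  define T where "T = sqrt (c * \<rho> + c\<^sup>2 / 4 * G\<^sup>2) - c / 2 * G"
  define es where "es = esssup (restrict_space lborel {0..}) (\<lambda>t. ereal (norm (A t)))"
  define a where "a = max 0 (real_of_ereal es)"
  have G0: "G \<ge> 0" unfolding G_def by simp
  have esT: "es < ereal T" using A_small unfolding es_def T_def G_def .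
  have cG: "c / 2 * G \<ge> 0" using c_pos G0 by simp
  have sq: "sqrt (c\<^sup>2 / 4 * G\<^sup>2) = c / 2 * G"
  proof -
    have "c\<^sup>2 / 4 * G\<^sup>2 = (c / 2 * G)\<^sup>2" by (simp add: power2_eq_square)
    then show ?thesis using cG by simp
  qed
  have Tpos: "T > 0"
  proof -
    have "c\<^sup>2 / 4 * G\<^sup>2 < c * \<rho> + c\<^sup>2 / 4 * G\<^sup>2" using c_pos rho_pos by simp
    then have "sqrt (c\<^sup>2 / 4 * G\<^sup>2) < sqrt (c * \<rho> + c\<^sup>2 / 4 * G\<^sup>2)" by (rule real_sqrt_less_mono)
    then show ?thesis unfolding T_def sq by simp
  qed
  have a0: "a \<ge> 0" unfolding a_def by simp
  have aT: "a < T"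
  proof (cases es)
    case (real r)
    then show ?thesis using esT Tpos unfolding a_def by auto
  next
    case PInf then show ?thesis using esT by simp
  next
    case MInf then show ?thesis using Tpos unfolding a_def by simp
  qed
  have small: "a\<^sup>2 + c * a * G < c * \<rho>"
  proof -
    have "a + c / 2 * G < sqrt (c * \<rho> + c\<^sup>2 / 4 * G\<^sup>2)" using aT unfolding T_def by simp
    moreover have "0 \<le> a + c / 2 * G" using a0 cG by simp
    ultimately have "(a + c / 2 * G)\<^sup>2 < (sqrt (c * \<rho> + c\<^sup>2 / 4 * G\<^sup>2))\<^sup>2"
      by (intro power_strict_mono) auto
    also have "\<dots> = c * \<rho> + c\<^sup>2 / 4 * G\<^sup>2"
      using c_pos rho_pos by (intro real_sqrt_pow2) (simp add: add_nonneg_nonneg)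
    finally show ?thesis by (simp add: power2_eq_square algebra_simps)
  qed
  have AEb: "AE r in lborel. r \<ge> 0 \<longrightarrow> norm (A r) \<le> a"
  proof -
    have "AE r in restrict_space lborel {0..}. ereal (norm (A r)) \<le> es"
      unfolding es_def by (rule esssup_AE)
    then have "AE r in lborel. r \<in> {0..} \<longrightarrow> ereal (norm (A r)) \<le> es"
      by (subst (asm) AE_restrict_space_iff) auto
    then show ?thesis
    proof (rule eventually_mono)
      fix r assume h: "r \<in> {0..} \<longrightarrow> ereal (norm (A r)) \<le> es"
      show "r \<ge> 0 \<longrightarrow> norm (A r) \<le> a"
      proof
        assume "r \<ge> 0"
        then have le: "ereal (norm (A r)) \<le> es" using h by auto
        show "norm (A r) \<le> a"
        proof (cases es)
          case (real x)
          then show ?thesis using le unfolding a_def by auto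
        next
          case PInf then show ?thesis using esT by simp
        next
          case MInf then show ?thesis using le by simp
        qed
      qed
    qed
  qed
  define P0 where "P0 = \<rho> - a * G"
  define \<kappa> where "\<kappa> = min (min P0 c / 2) ((c * P0 - a\<^sup>2) / (c + P0))"
  define \<delta> where "\<delta> = min \<kappa> \<eta> / (1 + G + G\<^sup>2)"
  define M where "M = 2 * (1 + G + G\<^sup>2) * (1 + max 0 K / \<rho>)"
  have P0: "P0 > 0" "a\<^sup>2 < c * P0"
  proof -
    have e1: "c * (a * G) = c * a * G" by simp
    have "c * (a * G) < c * \<rho>" using small zero_le_power2[of a] e1 by linarith
    then have "a * G < \<rho>" using c_pos by simp
    then show "P0 > 0" unfolding P0_def by simp
    show "a\<^sup>2 < c * P0" unfolding P0_def using small by (simp add: algebra_simps)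
  qed
  have kpos: "\<kappa> > 0" unfolding \<kappa>_def using quad_aux(1)[OF P0(1) c_pos a0 P0(2)] by simp
  have dpos: "\<delta> > 0" unfolding \<delta>_def using kpos eta_pos G0 by (intro divide_pos_pos) (auto simp: add_pos_nonneg)
  have Mpos: "M > 0" unfolding M_def using G0 rho_pos by (intro mult_pos_pos) (auto simp: add_pos_nonneg)
  have lin: "lin_op_on DS S" using S_sqrt unfolding is_sqrt_op_def self_adjoint_op_def by auto
  show ?thesis
  proof (rule exI[of _ \<delta>], rule conjI[OF dpos], rule exI[of _ M], rule conjI[OF Mpos], intro allI impI)
    fix u u' and s t :: real assume ms: "mild_solution DS S \<gamma> A u u'" and st: "0 \<le> s" "s \<le> t"
    interpret W: wsol2 DS S \<gamma> u u' a K c \<rho> \<eta>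
    proof unfold_locales
      show "subspace DS" using lin unfolding lin_op_on_def by auto
      show "\<And>x y. x \<in> DS \<Longrightarrow> y \<in> DS \<Longrightarrow> S (x + y) = S x + S y" using lin unfolding lin_op_on_def by auto
      show "\<And>x c. x \<in> DS \<Longrightarrow> S (c *\<^sub>R x) = c *\<^sub>R S x" using lin unfolding lin_op_on_def by auto
      show "\<And>\<tau>. \<tau> \<ge> 0 \<Longrightarrow> u \<tau> \<in> DS" using ms unfolding mild_solution_def by auto
      show "continuous_on {0..} u" using ms unfolding mild_solution_def by auto
      show "continuous_on {0..} (\<lambda>t. S (u t))" using ms unfolding mild_solution_def by auto
      show "\<And>\<tau>. \<tau> \<ge> 0 \<Longrightarrow> (u has_vector_derivative u' \<tau>) (at \<tau> within {0..})" using ms unfolding mild_solution_def by auto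
      show "continuous_on {0..} u'" using ms unfolding mild_solution_def by auto
      show "a \<ge> 0" by (rule a0)
      show "\<And>v s1 t1. v \<in> DS \<Longrightarrow> 0 \<le> s1 \<Longrightarrow> s1 \<le> t1 \<Longrightarrow>
       \<bar>inner (u' t1 - u' s1) v + integral {s1..t1} (\<lambda>r. inner (S (u r)) (S v) + inner (blinfun_apply \<gamma> (u' r)) v)\<bar>
         \<le> norm v * integral {s1..t1} (\<lambda>r. a * norm (u r))"
        using factW[OF ms AEb _ _ _ a0] by blast
      show "\<And>v. v \<in> DS \<Longrightarrow> blinfun_apply \<gamma> v \<in> DS" using gamma_V by auto
      show "\<And>v. v \<in> DS \<Longrightarrow> norm (S (blinfun_apply \<gamma> v)) \<le> K * norm (S v)" using K by auto
      show "\<And>v. inner (blinfun_apply \<gamma> v) v \<ge> c * (norm v)\<^sup>2" using gamma_coercive by auto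
      show "\<And>v. v \<in> DS \<Longrightarrow> inner (S v) (S (blinfun_apply \<gamma> v)) \<ge> \<rho> * (norm v)\<^sup>2 + \<eta> * (norm (S v))\<^sup>2"
        using key by auto
      show "c > 0" "\<rho> > 0" "\<eta> > 0" by (fact c_pos rho_pos eta_pos)+
      show "a\<^sup>2 + c * a * norm \<gamma> < c * \<rho>" using small unfolding G_def .
    qed
    have d: "W.\<delta>0 = \<delta>" unfolding W.\<delta>0_def W.\<kappa>0_def W.P0_def \<delta>_def \<kappa>_def P0_def G_def ..
    have m: "2 * (1 + norm \<gamma> + (norm \<gamma>)\<^sup>2) * (1 + W.C0) = M" unfolding W.C0_def M_def G_def ..
    show "(norm (S (u t)))\<^sup>2 + (norm (u' t))\<^sup>2 \<le> M * ((norm (S (u s)))\<^sup>2 + (norm (u' s))\<^sup>2) * exp (- \<delta> * (t - s))"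
      using W.final[OF st] unfolding d m .
  qed
qed

end
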